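(* Assume Conditions (A), (P) and (Ah) from the context and let $\tau>0$. Then for all $\zeta\in[0,1]$, \[\big\|(I+\tau A_{h,2})\big(e^{-\tau A_h}-(I+\tau A_{h,2})^{-1}(I+\tau A_{h,1})^{-1}\big)P_hA^{-\zeta}\big\|_{\mathcal L(H)}\le C\tau^{\zeta},\] with $C$ independent of $h$ and $\tau$.
   Context: $(H,(\cdot,\cdot)_H,\|\cdot\|_H)$ is a real Hilbert space with complexification $H_{\mathbb C}$; $C$ denotes generic constants independent of $h$ and $\tau$. Condition (A): $A:\mathrm{dom}(A)\subset H\to H$ and $A_\ell:\mathrm{dom}(A_\ell)\subset H\to H$ ($\ell=1,2$) are linear with $A=A_1+A_2$ on $\mathrm{dom}(A_1)\cap\mathrm{dom}(A_2)\subseteq\mathrm{dom}(A)$; $A$ is densely defined, positive and sectorial: there is $\varphi\in(0,\pi/2)$ such that $0$ and $S_\varphi=\{\lambda\in\mathbb C:\varphi<|\arg\lambda|\le\pi\}$ lie in the resolvent set and $\|(A-\lambda I)^{-1}\|_{\mathcal L(H_{\mathbb C})}\le C/|\lambda|$ on $S_\varphi$; $A_\ell A^{-1}$ is a well-defined bounded operator on $H$. $A^{-\zeta}$ denote negative fractional powers of $A$. Condition (P): $V_h\subset H$ ($h\in I\subset(0,\infty)$) are finite-dimensional subspaces and $P_h:H\to V_h$ bounded projections with $\|(I-P_h)v\|_H\le Ch^2\|Av\|_H$ for $v\in\mathrm{dom}(A)$. Condition (Ah): $V_h$ carries an inner product with norm $\|\cdot\|_{V_h}$, $\|v_h\|_H\le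 C\|v_h\|_{V_h}$, and $A_h,A_{h,1},A_{h,2}\in\mathcal L(V_h)$ satisfy for all $v_h,w_h\in V_h$, $\ell=1,2$: (a) $(A_hv_h,v_h)_H\ge C\|v_h\|^2_{V_h}$; (b) $|(A_hv_h,w_h)_H|\le C\|v_h\|_{V_h}\|w_h\|_{V_h}$; (c) $A_h=A_{h,1}+A_{h,2}$; (d) $(A_{h,\ell}v_h,v_h)_H\ge0$; (e) $\|A_{h,\ell}P_h\|_{\mathcal L(H)}\le Ch^{-2}$; (f) $\|(P_hA_\ell-A_{h,\ell}P_h)v\|_H\le C\|Av\|_H$ for $v\in\mathrm{dom}(A)$; (g) $\|A^{-1}-A_h^{-1}P_h\|_{\mathcal L(H)}\le Ch^2$. $e^{-tA_h}$ is the semigroup generated by $-A_h$ on $V_h$. Operators on $V_h$ composed with $P_h$ are regarded as operators on $H$; $\|\cdot\|_{\mathcal L(H)}$ is the operator norm w.r.t. $\|\cdot\|_H$. *)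

theory Defs
  imports "HOL-Analysis.Analysis"
begin

text \<open>Unbounded linear operators are modelled as a domain set D together with a
  function T that is linear on D (values outside D are irrelevant).\<close>

definition lin_on :: "'a::real_vector set \<Rightarrow> ('a \<Rightarrow> 'a) \<Rightarrow> bool" where
  "lin_on D T \<longleftrightarrow> subspace D \<and>
     (\<forall>x\<in>D. \<forall>y\<in>D. T (x + y) = T x + T y) \<and>
     (\<forall>c. \<forall>x\<in>D. T (c *\<^sub>R x) = c *\<^sub>R T x)"

text \<open>The complexification: H_C is modelled as H \<times> H (x + iy \<mapsto> (x,y)), with
  norm sqrt(|x|^2+|y|^2) (the product norm). cshift A z is A - z I on H_C.\<close>

definition cshift :: "('a::real_vector \<Rightarrow> 'a) \<Rightarrow> complex \<Rightarrow> 'a \<times> 'a \<Rightarrow> 'a \<times> 'a" where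
  "cshift A z p = (A (fst p) - Re z *\<^sub>R fst p + Im z *\<^sub>R snd p,
                   A (snd p) - Re z *\<^sub>R snd p - Im z *\<^sub>R fst p)"

definition in_resolvent_set :: "'a::real_normed_vector set \<Rightarrow> ('a \<Rightarrow> 'a) \<Rightarrow> complex \<Rightarrow> bool" where
  "in_resolvent_set D A z \<longleftrightarrow>
     (\<forall>q. \<exists>!p. p \<in> D \<times> D \<and> cshift A z p = q) \<and>
     (\<exists>M. \<forall>p\<in>D \<times> D. norm p \<le> M * norm (cshift A z p))"

definition inv_op :: "'a set \<Rightarrow> ('a \<Rightarrow> 'a) \<Rightarrow> 'a \<Rightarrow> 'a" where
  "inv_op D T y = (THE x. x \<in> D \<and> T x = y)"

definition res_op :: "'a::real_vector set \<Rightarrow> ('a \<Rightarrow> 'a) \<Rightarrow> real \<Rightarrow> 'a \<Rightarrow> 'a" where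
  "res_op D A t y = (THE x. x \<in> D \<and> A x + t *\<^sub>R x = y)"

text \<open>Negative fractional powers A^{-\<zeta>}, 0 \<le> \<zeta> \<le> 1, via Balakrishnan's formula
  A^{-\<zeta>} = (sin(\<pi>\<zeta>)/\<pi>) \<integral>_0^\<infinity> t^{-\<zeta>} (t I + A)^{-1} dt for 0 < \<zeta> < 1,
  A^0 = I, A^{-1} the inverse of A.\<close>

definition neg_frac_pow :: "'a::real_normed_vector set \<Rightarrow> ('a \<Rightarrow> 'a) \<Rightarrow> real \<Rightarrow> 'a \<Rightarrow> 'a" where
  "neg_frac_pow D A \<zeta> y =
     (if \<zeta> = 0 then y
      else if \<zeta> = 1 then inv_op D A y
      else (sin (pi * \<zeta>) / pi) *\<^sub>R integral {0<..} (\<lambda>t. (t powr (-\<zeta>)) *\<^sub>R res_op D A t y))"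

text \<open>The semigroup e^{-t T} generated by -T on a finite-dimensional space
  (exponential series).\<close>

definition semigroup_op :: "('a::real_normed_vector \<Rightarrow> 'a) \<Rightarrow> real \<Rightarrow> 'a \<Rightarrow> 'a" where
  "semigroup_op T t v = (\<Sum>n. ((- t) ^ n / fact n) *\<^sub>R (T ^^ n) v)"

definition shift_inv :: "'a::real_vector set \<Rightarrow> ('a \<Rightarrow> 'a) \<Rightarrow> real \<Rightarrow> 'a \<Rightarrow> 'a" where
  "shift_inv V T \<tau> v = (THE w. w \<in> V \<and> w + \<tau> *\<^sub>R T w = v)"

definition condA :: "'a::real_inner set \<Rightarrow> ('a \<Rightarrow> 'a) \<Rightarrow> 'a set \<Rightarrow> ('a \<Rightarrow> 'a)
    \<Rightarrow> 'a set \<Rightarrow> ('a \<Rightarrow> 'a) \<Rightarrow> bool" where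
  "condA D A D1 A1 D2 A2 \<longleftrightarrow>
     lin_on D A \<and> lin_on D1 A1 \<and> lin_on D2 A2 \<and>
     D1 \<inter> D2 \<subseteq> D \<and> (\<forall>v\<in>D1 \<inter> D2. A v = A1 v + A2 v) \<and>
     closure D = UNIV \<and>
     (\<forall>v\<in>D. inner (A v) v \<ge> 0) \<and>
     (\<exists>\<phi>. 0 < \<phi> \<and> \<phi> < pi / 2 \<and> in_resolvent_set D A 0 \<and>
        (\<exists>C. \<forall>z. \<phi> < \<bar>Arg z\<bar> \<longrightarrow>
           in_resolvent_set D A z \<and>
           (\<forall>p\<in>D \<times> D. cmod z * norm p \<le> C * norm (cshift A z p)))) \<and>
     (\<forall>y. inv_op D A y \<in> D1 \<and> inv_op D A y \<in> D2) \<and>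
     (\<exists>M. \<forall>y. norm (A1 (inv_op D A y)) \<le> M * norm y) \<and>
     (\<exists>M. \<forall>y. norm (A2 (inv_op D A y)) \<le> M * norm y)"

definition condP :: "real set \<Rightarrow> (real \<Rightarrow> 'a::real_normed_vector set) \<Rightarrow> (real \<Rightarrow> 'a \<Rightarrow> 'a)
    \<Rightarrow> 'a set \<Rightarrow> ('a \<Rightarrow> 'a) \<Rightarrow> bool" where
  "condP I V P D A \<longleftrightarrow>
     I \<subseteq> {0<..} \<and>
     (\<forall>h\<in>I. subspace (V h) \<and> (\<exists>B. finite B \<and> V h = span B) \<and>
        bounded_linear (P h) \<and> (\<forall>x. P h x \<in> V h) \<and> (\<forall>v\<in>V h. P h v = v)) \<and>
     (\<exists>C. \<forall>h\<in>I. \<forall>v\<in>D. norm (v - P h v) \<le> C * h\<^sup>2 * norm (A v))"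

definition inner_on :: "'a::real_vector set \<Rightarrow> ('a \<Rightarrow> 'a \<Rightarrow> real) \<Rightarrow> bool" where
  "inner_on V ip \<longleftrightarrow>
     (\<forall>u\<in>V. \<forall>v\<in>V. ip u v = ip v u) \<and>
     (\<forall>u\<in>V. \<forall>v\<in>V. \<forall>w\<in>V. ip (u + v) w = ip u w + ip v w) \<and>
     (\<forall>c. \<forall>u\<in>V. \<forall>v\<in>V. ip (c *\<^sub>R u) v = c * ip u v) \<and>
     (\<forall>v\<in>V. v \<noteq> 0 \<longrightarrow> ip v v > 0)"

definition normV :: "('a \<Rightarrow> 'a \<Rightarrow> real) \<Rightarrow> 'a \<Rightarrow> real" where
  "normV ip v = sqrt (ip v v)"

definition condAh :: "real set \<Rightarrow> (real \<Rightarrow> 'a::real_inner set) \<Rightarrow> (real \<Rightarrow> 'a \<Rightarrow> 'a)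
    \<Rightarrow> (real \<Rightarrow> 'a \<Rightarrow> 'a \<Rightarrow> real)
    \<Rightarrow> (real \<Rightarrow> 'a \<Rightarrow> 'a) \<Rightarrow> (real \<Rightarrow> 'a \<Rightarrow> 'a) \<Rightarrow> (real \<Rightarrow> 'a \<Rightarrow> 'a)
    \<Rightarrow> 'a set \<Rightarrow> ('a \<Rightarrow> 'a) \<Rightarrow> ('a \<Rightarrow> 'a) \<Rightarrow> ('a \<Rightarrow> 'a) \<Rightarrow> bool" where
  "condAh I V P ipV Ah Ah1 Ah2 D A A1 A2 \<longleftrightarrow>
     (\<forall>h\<in>I. inner_on (V h) (ipV h) \<and>
        lin_on (V h) (Ah h) \<and> lin_on (V h) (Ah1 h) \<and> lin_on (V h) (Ah2 h) \<and>
        (\<forall>v\<in>V h. Ah h v \<in> V h \<and> Ah1 h v \<in> V h \<and> Ah2 h v \<in> V h)) \<and>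
     (\<exists>C. \<forall>h\<in>I. \<forall>v\<in>V h. norm v \<le> C * normV (ipV h) v) \<and>
     \<comment> \<open>(a)\<close>
     (\<exists>C>0. \<forall>h\<in>I. \<forall>v\<in>V h. inner (Ah h v) v \<ge> C * (normV (ipV h) v)\<^sup>2) \<and>
     \<comment> \<open>(b)\<close>
     (\<exists>C. \<forall>h\<in>I. \<forall>v\<in>V h. \<forall>w\<in>V h.
        \<bar>inner (Ah h v) w\<bar> \<le> C * normV (ipV h) v * normV (ipV h) w) \<and>
     \<comment> \<open>(c)\<close>
     (\<forall>h\<in>I. \<forall>v\<in>V h. Ah h v = Ah1 h v + Ah2 h v) \<and>
     \<comment> \<open>(d)\<close>
     (\<forall>h\<in>I. \<forall>v\<in>V h. inner (Ah1 h v) v \<ge> 0 \<and> inner (Ah2 h v) v \<ge> 0) \<and>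
     \<comment> \<open>(e)\<close>
     (\<exists>C. \<forall>h\<in>I. \<forall>x. norm (Ah1 h (P h x)) \<le> C / h\<^sup>2 * norm x \<and>
                     norm (Ah2 h (P h x)) \<le> C / h\<^sup>2 * norm x) \<and>
     \<comment> \<open>(f)\<close>
     (\<exists>C. \<forall>h\<in>I. \<forall>v\<in>D. norm (P h (A1 v) - Ah1 h (P h v)) \<le> C * norm (A v) \<and>
                      norm (P h (A2 v) - Ah2 h (P h v)) \<le> C * norm (A v)) \<and>
     \<comment> \<open>(g)\<close>
     (\<exists>C. \<forall>h\<in>I. \<forall>x. norm (inv_op D A x - inv_op (V h) (Ah h) (P h x)) \<le> C * h\<^sup>2 * norm x)"

end

theory Submission
  imports Defs
begin

definition Eser :: "('a::real_normed_vector \<Rightarrow> 'a) \<Rightarrow> real \<Rightarrow> 'a \<Rightarrow> 'a" where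
  "Eser G s v = (\<Sum>n. ((- s) ^ n / fact n) *\<^sub>R (G ^^ n) v)"

lemma powG_bound:
  fixes G :: "'a::real_normed_vector \<Rightarrow> 'a"
  assumes K: "\<And>x. norm (G x) \<le> K * norm x" and "K \<ge> 0"
  shows "norm ((G ^^ n) v) \<le> K ^ n * norm v"
proof (induction n)
  case 0 then show ?case by (simp add: funpow_0)
next
  case (Suc n)
  have "norm ((G ^^ Suc n) v) \<le> K * norm ((G ^^ n) v)" using K by simp
  also have "\<dots> \<le> K * (K ^ n * norm v)" using Suc \<open>K \<ge> 0\<close> by (simp add: mult_left_mono)
  finally show ?case by simp
qed

lemma Eser_term_bound:
  fixes G :: "'a::real_normed_vector \<Rightarrow> 'a"
  assumes K: "\<And>x. norm (G x) \<le> K * norm x" and "K \<ge> 0" and "\<bar>s\<bar> \<le> R"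
  shows "norm (((- s) ^ n / fact n) *\<^sub>R (G ^^ n) v) \<le> (R * K) ^ n / fact n * norm v"
proof -
  have "norm (((- s) ^ n / fact n) *\<^sub>R (G ^^ n) v) = \<bar>s\<bar> ^ n / fact n * norm ((G ^^ n) v)"
    by (simp add: power_abs)
  also have "\<dots> \<le> R ^ n / fact n * (K ^ n * norm v)"
    by (intro mult_mono divide_right_mono power_mono powG_bound[OF assms(1,2)]) (use assms in auto)
  finally show ?thesis by (simp add: power_mult_distrib)
qed

lemma summable_expM: "summable (\<lambda>n. (x::real) ^ n / fact n * c)"
proof -
  have "summable (\<lambda>n. x ^ n /\<^sub>R fact n)" by (rule summable_exp_generic)
  then have "summable (\<lambda>n. x ^ n / fact n)" by (simp add: divide_inverse_commute)
  then show ?thesis by (rule summable_mult2)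
qed

lemma summable_cmp:
  fixes f :: "nat \<Rightarrow> 'a::{real_normed_vector,complete_space}"
  assumes fg: "\<And>n. norm (f n) \<le> g n" and g: "summable g"
  shows "summable f"
proof -
  have Cg: "Cauchy (\<lambda>n. \<Sum>i<n. g i)" using g summable_iff_convergent convergent_Cauchy by blast
  have le: "dist (\<Sum>i<m. f i) (\<Sum>i<n. f i) \<le> dist (\<Sum>i<m. g i) (\<Sum>i<n. g i)" if mn: "m \<le> n" for m n
  proof -
    have sf: "(\<Sum>i<n. f i) = (\<Sum>i<m. f i) + sum f {m..<n}"
      using sum.atLeastLessThan_concat[of 0 m n f] mn by (simp add: lessThan_atLeast0)
    have sg: "(\<Sum>i<n. g i) = (\<Sum>i<m. g i) + sum g {m..<n}"
      using sum.atLeastLessThan_concat[of 0 m n g] mn by (simp add: lessThan_atLeast0)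
    have "dist (\<Sum>i<m. f i) (\<Sum>i<n. f i) = norm (sum f {m..<n})"
      unfolding sf dist_norm by (simp add: norm_minus_commute)
    also have "\<dots> \<le> sum g {m..<n}" by (rule sum_norm_le) (use fg in auto)
    also have "\<dots> \<le> dist (\<Sum>i<m. g i) (\<Sum>i<n. g i)" unfolding sg dist_real_def by simp
    finally show ?thesis .
  qed
  have "Cauchy (\<lambda>n. \<Sum>i<n. f i)"
  proof (rule metric_CauchyI)
    fix e :: real assume e: "0 < e"
    obtain M where M: "\<And>m n. m \<ge> M \<Longrightarrow> n \<ge> M \<Longrightarrow> dist (\<Sum>i<m. g i) (\<Sum>i<n. g i) < e"
      using metric_CauchyD[OF Cg e] by blast
    show "\<exists>M. \<forall>m\<ge>M. \<forall>n\<ge>M. dist (\<Sum>i<m. f i) (\<Sum>i<n. f i) < e"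
    proof (intro exI allI impI)
      fix m n assume "m \<ge> M" "n \<ge> M"
      then show "dist (\<Sum>i<m. f i) (\<Sum>i<n. f i) < e"
        using le[of m n] le[of n m] M[of m n] M[of n m] by (cases "m \<le> n") (auto simp: dist_commute)
    qed
  qed
  then show ?thesis using Cauchy_convergent_iff summable_iff_convergent by blast
qed

lemma Eser_summable:
  fixes G :: "'a::{real_normed_vector,complete_space} \<Rightarrow> 'a"
  assumes K: "\<And>x. norm (G x) \<le> K * norm x" and "K \<ge> 0"
  shows "summable (\<lambda>n. ((- s) ^ n / fact n) *\<^sub>R (G ^^ n) v)"
  by (rule summable_cmp[OF _ summable_expM[of "\<bar>s\<bar> * K" "norm v"]])
     (rule Eser_term_bound[OF assms], simp)

lemma ser_term_bound:
  fixes w :: "nat \<Rightarrow> 'a::real_normed_vector"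
  assumes w: "\<And>n. norm (w n) \<le> K ^ n * c" and "K \<ge> 0" and "\<bar>s\<bar> \<le> R"
  shows "norm (((- s) ^ n / fact n) *\<^sub>R w n) \<le> (R * K) ^ n / fact n * c"
proof -
  have "norm (((- s) ^ n / fact n) *\<^sub>R w n) = \<bar>s\<bar> ^ n / fact n * norm (w n)"
    by (simp add: power_abs)
  also have "\<dots> \<le> R ^ n / fact n * (K ^ n * c)"
    by (intro mult_mono divide_right_mono power_mono w) (use assms in auto)
  finally show ?thesis by (simp add: power_mult_distrib)
qed

lemma ser_deriv:
  fixes w :: "nat \<Rightarrow> 'a::banach"
  assumes K: "\<And>n. norm (w n) \<le> K ^ n * c" and K0: "K \<ge> 0"
  shows "((\<lambda>s. \<Sum>n. ((- s) ^ n / fact n) *\<^sub>R w n) has_vector_derivative (- (\<Sum>n. ((- s) ^ n / fact n) *\<^sub>R w (Suc n)))) (at s)"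
proof -
  define R where "R = \<bar>s\<bar> + 1"
  define S where "S = ball (0::real) R"
  have c0: "c \<ge> 0"
  proof -
    have "norm (w 0) \<le> c" using K[of 0] by simp
    then show ?thesis using norm_ge_zero order_trans by blast
  qed
  have Ks: "norm (w (Suc n)) \<le> K ^ n * (K * c)" for n using K[of "Suc n"] by (simp add: ac_simps)
  have Kc: "K * c \<ge> 0" using K0 c0 by simp
  have summ: "summable (\<lambda>n. ((- x) ^ n / fact n) *\<^sub>R w n)" for x
    by (rule summable_cmp[OF _ summable_expM[of "\<bar>x\<bar> * K" c]]) (rule ser_term_bound[OF K K0], simp)
  define f where "f n x = ((- x) ^ n / fact n) *\<^sub>R w n" for n x
  define dc where "dc n x = (if n = 0 then 0 else - ((- x) ^ (n - 1) / fact (n - 1)))" for n and x::real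
  define f' where "f' n x = (\<lambda>h. h *\<^sub>R (dc n x *\<^sub>R w n))" for n x
  define g' where "g' x = (\<lambda>h. h *\<^sub>R (- (\<Sum>n. ((- x) ^ n / fact n) *\<^sub>R w (Suc n))))" for x
  have dcd: "((\<lambda>x. (- x) ^ n / fact n) has_real_derivative dc n x) (at x)" for n x
  proof (cases n)
    case 0 then show ?thesis by (simp add: dc_def)
  next
    case (Suc m)
    have "((\<lambda>x. (- x) ^ n / fact n) has_real_derivative (of_nat n * (- x) ^ (n - 1) * (-1)) / fact n) (at x)"
      by (auto intro!: derivative_eq_intros)
    moreover have "(of_nat n * (- x) ^ (n - 1) * (-1)) / fact n = dc n x"
    proof -
      have "(of_nat n * (- x) ^ (n - 1) * (-1)) / fact n = (real (Suc m) * (- ((- x) ^ m))) / (real (Suc m) * fact m)"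
        using Suc by (simp add: fact_Suc)
      also have "\<dots> = - ((- x) ^ m) / fact m"
        by (rule nonzero_mult_divide_mult_cancel_left) simp
      finally show ?thesis using Suc by (simp add: dc_def)
    qed
    ultimately show ?thesis by simp
  qed
  have fd: "(f n has_derivative f' n x) (at x within S)" for n x
  proof -
    have "((\<lambda>x. ((- x) ^ n / fact n) *\<^sub>R w n) has_vector_derivative (dc n x *\<^sub>R w n)) (at x within S)"
      using has_vector_derivative_scaleR[OF has_field_derivative_at_within[OF dcd] has_vector_derivative_const[of "w n"]] by simp
    then show ?thesis by (simp add: has_vector_derivative_def f_def[abs_def] f'_def)
  qed
  have ul: "uniform_limit S (\<lambda>m x. \<Sum>j<m. ((- x) ^ j / fact j) *\<^sub>R w (Suc j)) (\<lambda>x. (\<Sum>n. ((- x) ^ n / fact n) *\<^sub>R w (Suc n))) sequentially"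
  proof (rule Weierstrass_m_test[where M = "\<lambda>j. (R*K)^j/fact j * (K*c)"])
    fix n x assume "x \<in> S" then have "\<bar>x\<bar> \<le> R" by (simp add: S_def dist_real_def)
    then show "norm (((- x) ^ n / fact n) *\<^sub>R w (Suc n)) \<le> (R*K)^n/fact n * (K*c)"
      by (rule ser_term_bound[OF Ks K0])
  next
    show "summable (\<lambda>j. (R*K)^j/fact j * (K*c))" by (rule summable_expM)
  qed
  have sumid: "(\<Sum>i<Suc m. f' i x h) = h *\<^sub>R (- (\<Sum>j<m. ((- x) ^ j / fact j) *\<^sub>R w (Suc j)))" for m x h
  proof -
    have "(\<Sum>i<Suc m. f' i x h) = f' 0 x h + (\<Sum>j<m. f' (Suc j) x h)"
      by (rule sum.lessThan_Suc_shift)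
    also have "\<dots> = (\<Sum>j<m. h *\<^sub>R (- (((- x) ^ j / fact j) *\<^sub>R w (Suc j))))"
      by (simp add: f'_def dc_def)
    also have "\<dots> = h *\<^sub>R (- (\<Sum>j<m. ((- x) ^ j / fact j) *\<^sub>R w (Suc j)))"
      by (simp add: scaleR_sum_right sum_negf)
    finally show ?thesis .
  qed
  have unif: "\<forall>\<^sub>F n in sequentially. \<forall>x\<in>S. \<forall>h. norm (sum (\<lambda>i. f' i x h) {..<n} - g' x h) \<le> e * norm h"
    if e: "e > 0" for e
  proof -
    from uniform_limitD[OF ul e] obtain N where
      N: "\<And>m x. m \<ge> N \<Longrightarrow> x \<in> S \<Longrightarrow> dist (\<Sum>j<m. ((- x) ^ j / fact j) *\<^sub>R w (Suc j)) ((\<Sum>n. ((- x) ^ n / fact n) *\<^sub>R w (Suc n))) < e"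
      unfolding eventually_sequentially by blast
    show ?thesis unfolding eventually_sequentially
    proof (intro exI[of _ "Suc N"] allI impI ballI)
      fix n x h assume n: "Suc N \<le> n" and x: "x \<in> S"
      then obtain m where m: "n = Suc m" "m \<ge> N" by (cases n) auto
      have "norm (sum (\<lambda>i. f' i x h) {..<n} - g' x h)
          = \<bar>h\<bar> * dist (\<Sum>j<m. ((- x) ^ j / fact j) *\<^sub>R w (Suc j)) ((\<Sum>n. ((- x) ^ n / fact n) *\<^sub>R w (Suc n)))"
        unfolding m sumid g'_def dist_norm
      proof -
        have "h *\<^sub>R (- (\<Sum>j<m. ((- x) ^ j / fact j) *\<^sub>R w (Suc j))) - h *\<^sub>R (- (\<Sum>n. ((- x) ^ n / fact n) *\<^sub>R w (Suc n)))
           = - (h *\<^sub>R ((\<Sum>j<m. ((- x) ^ j / fact j) *\<^sub>R w (Suc j)) - (\<Sum>n. ((- x) ^ n / fact n) *\<^sub>R w (Suc n))))"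
          by (simp add: algebra_simps)
        then show "norm (h *\<^sub>R (- (\<Sum>j<m. ((- x) ^ j / fact j) *\<^sub>R w (Suc j))) - h *\<^sub>R (- (\<Sum>n. ((- x) ^ n / fact n) *\<^sub>R w (Suc n))))
           = \<bar>h\<bar> * norm ((\<Sum>j<m. ((- x) ^ j / fact j) *\<^sub>R w (Suc j)) - (\<Sum>n. ((- x) ^ n / fact n) *\<^sub>R w (Suc n)))"
          by (simp only: norm_minus_cancel norm_scaleR real_norm_def)
      qed
      also have "\<dots> \<le> \<bar>h\<bar> * e" using N[OF m(2) x] by (simp add: mult_left_mono)
      finally show "norm (sum (\<lambda>i. f' i x h) {..<n} - g' x h) \<le> e * norm h" by (simp add: mult.commute)
    qed
  qed
  have cS: "convex S" by (simp add: S_def)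
  have sS: "s \<in> S" by (simp add: S_def R_def)
  have sums: "(\<lambda>n. f n s) sums (\<Sum>n. ((- s) ^ n / fact n) *\<^sub>R w n)"
    unfolding f_def by (rule summable_sums[OF summ])
  obtain g where g: "\<And>x. x \<in> S \<Longrightarrow> (\<lambda>n. f n x) sums g x \<and> (g has_derivative g' x) (at x within S)"
    using has_derivative_series[OF cS fd unif sS sums] by blast
  have geq: "g x = (\<Sum>n. ((- x) ^ n / fact n) *\<^sub>R w n)" if "x \<in> S" for x
    using g[OF that] sums_unique unfolding f_def by metis
  have "(g has_derivative g' s) (at s)"
    using g[OF sS] at_within_open[OF sS] by (simp add: S_def)
  then have "((\<lambda>s. \<Sum>n. ((- s) ^ n / fact n) *\<^sub>R w n) has_derivative g' s) (at s)"
    by (rule has_derivative_transform_within_open[where s=S]) (use geq sS in \<open>auto simp: S_def\<close>)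
  then show ?thesis by (simp add: has_vector_derivative_def g'_def)
qed


lemma norm_J: "norm (blinfun_inner_right (x::'a::real_inner)) = norm x"
proof (cases "x = 0")
  case True then show ?thesis
    using linear_0[OF bounded_linear.linear[OF bounded_linear_blinfun_inner_right]] by simp
next
  case False
  show ?thesis
  proof (rule norm_blinfun_eqI)
    show "norm x \<le> norm (blinfun_apply (blinfun_inner_right x) x) / norm x"
      using False by (simp add: power2_norm_eq_inner[symmetric] power2_eq_square)
    show "norm (blinfun_apply (blinfun_inner_right x) y) \<le> norm x * norm y" for y
      by (simp add: Cauchy_Schwarz_ineq2)
  qed simp
qed

lemma vd_transfer:
  fixes f :: "real \<Rightarrow> 'a::real_inner"
  assumes "((\<lambda>t. blinfun_inner_right (f t)) has_vector_derivative blinfun_inner_right d) (at s)"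
  shows "(f has_vector_derivative d) (at s)"
proof -
  let ?J = "blinfun_inner_right :: 'a \<Rightarrow> _"
  have L: "linear ?J" using bounded_linear_blinfun_inner_right bounded_linear.linear by blast
  have eq: "norm (?J (f (s + h)) - ?J (f s) - h *\<^sub>R ?J d) = norm (f (s + h) - f s - h *\<^sub>R d)" for h
  proof -
    have "?J (f (s + h)) - ?J (f s) - h *\<^sub>R ?J d = ?J (f (s + h) - f s - h *\<^sub>R d)"
      using linear_diff[OF L] linear_scale[OF L] by simp
    then show ?thesis using norm_J by simp
  qed
  from assms show ?thesis
    unfolding has_vector_derivative_def has_derivative_at using eq by (simp add: bounded_linear_scaleR_left)
qed

lemma Eser_deriv:
  fixes G :: "'a::{real_inner,complete_space} \<Rightarrow> 'a"
  assumes K: "\<And>x. norm (G x) \<le> K * norm x" and K0: "K \<ge> 0" and bl: "bounded_linear G"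
  shows "((\<lambda>s. Eser G s v) has_vector_derivative (- Eser G s (G v))) (at s)"
proof -
  let ?J = "blinfun_inner_right :: 'a \<Rightarrow> _"
  have Jb: "bounded_linear ?J" by (rule bounded_linear_blinfun_inner_right)
  define w where "w n = ?J ((G ^^ n) v)" for n
  have wb: "norm (w n) \<le> K ^ n * norm v" for n
    unfolding w_def norm_J by (rule powG_bound[OF K K0])
  have eq1: "?J (Eser G x u) = (\<Sum>n. ((- x) ^ n / fact n) *\<^sub>R ?J ((G ^^ n) u))" for x u
    unfolding Eser_def
    using bounded_linear.suminf[OF Jb Eser_summable[OF K K0]] linear_scale[OF bounded_linear.linear[OF Jb]]
    by simp
  have "((\<lambda>s. \<Sum>n. ((- s) ^ n / fact n) *\<^sub>R w n) has_vector_derivative (- (\<Sum>n. ((- s) ^ n / fact n) *\<^sub>R w (Suc n)))) (at s)"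
    by (rule ser_deriv[OF wb K0])
  moreover have "(\<lambda>s. \<Sum>n. ((- s) ^ n / fact n) *\<^sub>R w n) = (\<lambda>s. ?J (Eser G s v))"
    unfolding w_def eq1 by simp
  moreover have "(- (\<Sum>n. ((- s) ^ n / fact n) *\<^sub>R w (Suc n))) = ?J (- Eser G s (G v))"
    unfolding w_def eq1 linear_neg[OF bounded_linear.linear[OF Jb]] by (simp add: funpow_swap1)
  ultimately show ?thesis using vd_transfer by metis
qed

lemma linear_funpow: "linear (G::'a::real_vector \<Rightarrow> 'a) \<Longrightarrow> linear (G ^^ n)"
  by (induction n) (auto simp: linear_compose id_def[symmetric] linear_id)

lemma Eser_add:
  fixes G :: "'a::{real_normed_vector,complete_space} \<Rightarrow> 'a"
  assumes K: "\<And>x. norm (G x) \<le> K * norm x" and K0: "K \<ge> 0" and lin: "linear G"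
  shows "Eser G s (x + y) = Eser G s x + Eser G s y"
proof -
  have "(\<lambda>n. ((- s) ^ n / fact n) *\<^sub>R (G ^^ n) (x + y)) = (\<lambda>n. ((- s) ^ n / fact n) *\<^sub>R (G ^^ n) x + ((- s) ^ n / fact n) *\<^sub>R (G ^^ n) y)"
    using linear_add[OF linear_funpow[OF lin]] by (simp add: scaleR_add_right)
  then show ?thesis unfolding Eser_def
    using suminf_add[OF Eser_summable[OF K K0] Eser_summable[OF K K0]] by simp
qed

lemma Eser_scale:
  fixes G :: "'a::{real_normed_vector,complete_space} \<Rightarrow> 'a"
  assumes K: "\<And>x. norm (G x) \<le> K * norm x" and K0: "K \<ge> 0" and lin: "linear G"
  shows "Eser G s (c *\<^sub>R x) = c *\<^sub>R Eser G s x"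
proof -
  have "(\<lambda>n. ((- s) ^ n / fact n) *\<^sub>R (G ^^ n) (c *\<^sub>R x)) = (\<lambda>n. c *\<^sub>R (((- s) ^ n / fact n) *\<^sub>R (G ^^ n) x))"
    using linear_scale[OF linear_funpow[OF lin]] by (simp add: mult.commute)
  then show ?thesis unfolding Eser_def
    using suminf_scaleR_right[OF Eser_summable[OF K K0]] by simp
qed

lemma Eser_linear:
  fixes G :: "'a::{real_normed_vector,complete_space} \<Rightarrow> 'a"
  assumes K: "\<And>x. norm (G x) \<le> K * norm x" and K0: "K \<ge> 0" and lin: "linear G"
  shows "linear (Eser G s)"
  by (rule linearI) (use Eser_add[OF assms] Eser_scale[OF assms] in auto)

lemma Eser_inv:
  fixes G Q :: "'a::{real_normed_vector,complete_space} \<Rightarrow> 'a"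
  assumes K: "\<And>x. norm (G x) \<le> K * norm x" and K0: "K \<ge> 0" and Q: "bounded_linear Q"
    and QG: "\<And>x. Q (G x) = G x" and Qv: "Q v = v"
  shows "Q (Eser G s v) = Eser G s v"
proof -
  have "Q ((G ^^ n) v) = (G ^^ n) v" for n
    by (cases n) (auto simp: Qv QG)
  then show ?thesis unfolding Eser_def
    using bounded_linear.suminf[OF Q Eser_summable[OF K K0]] linear_scale[OF bounded_linear.linear[OF Q]] by simp
qed

lemma Eser_commute:
  fixes G :: "'a::{real_normed_vector,complete_space} \<Rightarrow> 'a"
  assumes K: "\<And>x. norm (G x) \<le> K * norm x" and K0: "K \<ge> 0" and bl: "bounded_linear G"
  shows "G (Eser G s x) = Eser G s (G x)"
  unfolding Eser_def
  using bounded_linear.suminf[OF bl Eser_summable[OF K K0]] linear_scale[OF bounded_linear.linear[OF bl]]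
  by (simp add: funpow_swap1)

lemma Eser_0: "Eser G 0 v = v"
proof -
  have "(\<lambda>n. ((- 0::real) ^ n / fact n) *\<^sub>R (G ^^ n) v) = (\<lambda>n. if n = 0 then (G ^^ n) v else 0)"
    by auto
  then show ?thesis unfolding Eser_def using sums_single[of 0 "\<lambda>n. (G ^^ n) v"] sums_unique by fastforce
qed

lemma fd_surj:
  fixes g :: "'a::real_vector \<Rightarrow> 'a"
  assumes lin: "linear g" and VB: "V = span B" "finite B" and gV: "\<And>v. v \<in> V \<Longrightarrow> g v \<in> V"
    and inj: "inj_on g V" and y: "y \<in> V"
  shows "\<exists>x\<in>V. g x = y"
proof -
  obtain B0 where B0: "B0 \<subseteq> V" "independent B0" "V \<subseteq> span B0" "card B0 = dim V"
    by (rule basis_exists)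
  have fB0: "finite B0" using independent_span_bound[OF VB(2) B0(2)] B0(1) VB(1) by blast
  have sB0: "span B0 = V"
    using B0(1,3) VB(1) by (metis span_minimal subspace_span subset_antisym)
  define C where "C = g ` B0"
  have indC: "independent C"
    unfolding C_def by (rule linear_independent_injective_image[OF lin B0(2)]) (use inj sB0 in simp)
  have cC: "card C = card B0" unfolding C_def by (rule card_image) (use inj B0(1) inj_on_subset in blast)
  have CV: "C \<subseteq> V" using gV B0(1) C_def by auto
  have fC: "finite C" using fB0 C_def by simp
  have "y \<in> span C"
  proof (rule ccontr)
    assume ny: "y \<notin> span C"
    have ind2: "independent (insert y C)" by (rule independent_insertI[OF ny indC])
    have "insert y C \<subseteq> span B0" using CV y B0(3) by auto
    from independent_span_bound[OF fB0 ind2 this] have "card (insert y C) \<le> card B0" by simp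
    moreover have "y \<notin> C" using ny span_base by blast
    ultimately show False using cC fC by simp
  qed
  then have "y \<in> g ` span B0" unfolding C_def using span_linear_image[OF lin] by blast
  then show ?thesis using sB0 by auto
qed

lemma lin_on_add: "lin_on V T \<Longrightarrow> x \<in> V \<Longrightarrow> y \<in> V \<Longrightarrow> T (x + y) = T x + T y"
  by (simp add: lin_on_def)
lemma lin_on_scale: "lin_on V T \<Longrightarrow> x \<in> V \<Longrightarrow> T (c *\<^sub>R x) = c *\<^sub>R T x"
  by (simp add: lin_on_def)
lemma lin_on_subspace: "lin_on V T \<Longrightarrow> subspace V"
  by (simp add: lin_on_def)
lemma lin_on_0: "lin_on V T \<Longrightarrow> T 0 = 0"
  using lin_on_scale[of V T 0 0] lin_on_subspace[of V T] subspace_0 by fastforce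
lemma lin_on_diff: "lin_on V T \<Longrightarrow> x \<in> V \<Longrightarrow> y \<in> V \<Longrightarrow> T (x - y) = T x - T y"
proof -
  assume l: "lin_on V T" and x: "x \<in> V" and y: "y \<in> V"
  have s: "subspace V" using l lin_on_subspace by blast
  have xy: "x - y \<in> V" using s x y subspace_diff by blast
  have "T x = T ((x - y) + y)" by simp
  also have "\<dots> = T (x - y) + T y" by (rule lin_on_add[OF l xy y])
  finally show ?thesis by simp
qed

lemma dnormsq:
  assumes "(u has_vector_derivative u') (at t)"
  shows "((\<lambda>t. inner (u t) (u t)) has_real_derivative 2 * inner (u t) u') (at t)"
proof -
  have "((\<lambda>t. inner (u t) (u t)) has_derivative (\<lambda>h. inner (u t) (h *\<^sub>R u') + inner (h *\<^sub>R u') (u t))) (at t)"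
    using has_derivative_inner[OF assms[unfolded has_vector_derivative_def] assms[unfolded has_vector_derivative_def]] .
  moreover have "(\<lambda>h. inner (u t) (h *\<^sub>R u') + inner (h *\<^sub>R u') (u t)) = (*) (2 * inner (u t) u')"
    by (auto simp: inner_commute algebra_simps)
  ultimately show ?thesis by (simp add: has_field_derivative_def)
qed

lemma inv_op_props:
  assumes "\<exists>!x. x \<in> V \<and> T x = y"
  shows "inv_op V T y \<in> V \<and> T (inv_op V T y) = y"
  unfolding inv_op_def using theI'[OF assms] .

lemma inv_op_eq:
  assumes "\<And>x x'. x \<in> V \<Longrightarrow> x' \<in> V \<Longrightarrow> T x = T x' \<Longrightarrow> x = x'" "x \<in> V" "T x = y"
  shows "inv_op V T y = x"
  unfolding inv_op_def using assms by blast

locale dsys =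
  fixes V :: "'a::{real_inner,complete_space} set" and P A A1 A2 :: "'a \<Rightarrow> 'a"
    and ip :: "'a \<Rightarrow> 'a \<Rightarrow> real" and B :: "'a set" and ca cb ce :: real
  assumes P_bl: "bounded_linear P" and P_in: "\<And>x. P x \<in> V" and P_id: "\<And>v. v \<in> V \<Longrightarrow> P v = v"
    and VB: "V = span B" "finite B"
    and linA: "lin_on V A" and linA1: "lin_on V A1" and linA2: "lin_on V A2"
    and AV: "\<And>v. v \<in> V \<Longrightarrow> A v \<in> V" and A1V: "\<And>v. v \<in> V \<Longrightarrow> A1 v \<in> V"
    and A2V: "\<And>v. v \<in> V \<Longrightarrow> A2 v \<in> V"
    and ipV: "inner_on V ip"
    and ca_pos: "ca > 0" and coer: "\<And>v. v \<in> V \<Longrightarrow> inner (A v) v \<ge> ca * (normV ip v)\<^sup>2"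
    and bnd: "\<And>v w. v \<in> V \<Longrightarrow> w \<in> V \<Longrightarrow> \<bar>inner (A v) w\<bar> \<le> cb * normV ip v * normV ip w"
    and sumA: "\<And>v. v \<in> V \<Longrightarrow> A v = A1 v + A2 v"
    and acc1: "\<And>v. v \<in> V \<Longrightarrow> inner (A1 v) v \<ge> 0"
    and acc2: "\<And>v. v \<in> V \<Longrightarrow> inner (A2 v) v \<ge> 0"
    and ce0: "ce \<ge> 0" and e1: "\<And>x. norm (A1 (P x)) \<le> ce * norm x"
    and e2: "\<And>x. norm (A2 (P x)) \<le> ce * norm x"
begin

lemma subV: "subspace V" using linA lin_on_subspace by blast
lemma V0: "0 \<in> V" using subV subspace_0 by blast
lemma Vadd: "x \<in> V \<Longrightarrow> y \<in> V \<Longrightarrow> x + y \<in> V" using subV subspace_add by blast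
lemma Vdiff: "x \<in> V \<Longrightarrow> y \<in> V \<Longrightarrow> x - y \<in> V" using subV subspace_diff by blast
lemma Vscale: "x \<in> V \<Longrightarrow> c *\<^sub>R x \<in> V" using subV subspace_scale by blast

lemma P_lin: "linear P" using P_bl bounded_linear.linear by blast
lemma P_add: "P (x + y) = P x + P y" using P_lin linear_add by blast
lemma P_diff: "P (x - y) = P x - P y" using P_lin linear_diff by blast
lemma P_scale: "P (c *\<^sub>R x) = c *\<^sub>R P x" using P_lin linear_scale by blast

lemma ip_nonneg: "v \<in> V \<Longrightarrow> ip v v \<ge> 0"
proof -
  assume v: "v \<in> V"
  show ?thesis
  proof (cases "v = 0")
    case True
    have "ip (0 *\<^sub>R 0) 0 = 0 * ip 0 0" using ipV V0 unfolding inner_on_def by blast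
    then show ?thesis using True by simp
  next
    case False
    have "ip v v > 0" using ipV v False unfolding inner_on_def by blast
    then show ?thesis by simp
  qed
qed

lemma nV_sq: "v \<in> V \<Longrightarrow> (normV ip v)\<^sup>2 = ip v v"
  using ip_nonneg by (simp add: normV_def)
lemma nV_nonneg: "v \<in> V \<Longrightarrow> normV ip v \<ge> 0" using ip_nonneg by (simp add: normV_def)

lemma A_nonneg: "v \<in> V \<Longrightarrow> inner (A v) v \<ge> 0"
  using coer[of v] ca_pos by (smt (verit) zero_le_power2 mult_nonneg_nonneg)

lemma A_inj0: assumes v: "v \<in> V" and "A v = 0" shows "v = 0"
proof (rule ccontr)
  assume "v \<noteq> 0"
  then have "ip v v > 0" using ipV v unfolding inner_on_def by blast
  then have "ca * (normV ip v)\<^sup>2 > 0" using ca_pos nV_sq[OF v] by simp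
  then show False using coer[OF v] assms by simp
qed

definition G :: "'a \<Rightarrow> 'a" where "G x = A (P x)"

lemma G_V: "G x \<in> V" unfolding G_def using AV P_in by blast
lemma G_eq: "v \<in> V \<Longrightarrow> G v = A v" unfolding G_def using P_id by simp
lemma P_G: "P (G x) = G x" using P_id G_V by blast

lemma A_P_bound: "norm (A (P x)) \<le> 2 * ce * norm x"
proof -
  have "A (P x) = A1 (P x) + A2 (P x)" using sumA P_in by blast
  then have "norm (A (P x)) \<le> norm (A1 (P x)) + norm (A2 (P x))" by (simp add: norm_triangle_ineq)
  then show ?thesis using e1[of x] e2[of x] by simp
qed

lemma A_bound: "v \<in> V \<Longrightarrow> norm (A v) \<le> 2 * ce * norm v"
  using A_P_bound[of v] P_id by simp
lemma A1_bound: "v \<in> V \<Longrightarrow> norm (A1 v) \<le> ce * norm v"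
  using e1[of v] P_id by simp
lemma A2_bound: "v \<in> V \<Longrightarrow> norm (A2 v) \<le> ce * norm v"
  using e2[of v] P_id by simp

lemma G_bound: "norm (G x) \<le> (2 * ce) * norm x" unfolding G_def using A_P_bound by simp
lemma ce2: "2 * ce \<ge> 0" using ce0 by simp

lemma G_add: "G (x + y) = G x + G y"
  unfolding G_def P_add using lin_on_add[OF linA P_in P_in] .
lemma G_scale: "G (c *\<^sub>R x) = c *\<^sub>R G x"
  unfolding G_def P_scale using lin_on_scale[OF linA P_in] .
lemma G_lin: "linear G" by (rule linearI) (simp_all add: G_add G_scale)
lemma G_bl: "bounded_linear G"
proof (rule bounded_linear_intro[where K="2*ce"])
  show "norm (G x) \<le> norm x * (2 * ce)" for x by (metis G_bound mult.commute)
qed (simp_all add: G_add G_scale)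

abbreviation E :: "real \<Rightarrow> 'a \<Rightarrow> 'a" where "E \<equiv> Eser G"

lemma E_V: "v \<in> V \<Longrightarrow> E s v \<in> V"
  using Eser_inv[OF G_bound ce2 P_bl P_G, of v s] P_id P_in by metis

lemma E_lin: "linear (E s)" by (rule Eser_linear[OF G_bound ce2 G_lin])
lemma E_add: "E s (x + y) = E s x + E s y" using E_lin linear_add by blast
lemma E_diff: "E s (x - y) = E s x - E s y" using E_lin linear_diff by blast
lemma E_scale: "E s (c *\<^sub>R x) = c *\<^sub>R E s x" using E_lin linear_scale by blast
lemma E_comm: "G (E s x) = E s (G x)" by (rule Eser_commute[OF G_bound ce2 G_bl])
lemma E_commA: "v \<in> V \<Longrightarrow> A (E s v) = E s (A v)"
  using E_comm[of s v] G_eq E_V by simp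
lemma E_deriv: "((\<lambda>s. E s v) has_vector_derivative (- E s (G v))) (at s)"
  by (rule Eser_deriv[OF G_bound ce2 G_bl])

lemma Gpow_V: "v \<in> V \<Longrightarrow> (G ^^ n) v \<in> V"
  by (cases n) (auto simp: G_V)

lemma semigroup_eq: assumes v: "v \<in> V" shows "semigroup_op A s v = E s v"
proof -
  have "(A ^^ n) v = (G ^^ n) v" for n
  proof (induction n)
    case 0 then show ?case by simp
  next
    case (Suc n)
    then show ?case using G_eq[OF Gpow_V[OF v, of n]] by simp
  qed
  then show ?thesis unfolding semigroup_op_def Eser_def by simp
qed

lemma E_contr: assumes v: "v \<in> V" and s: "s \<ge> 0" shows "norm (E s v) \<le> norm v"
proof -
  define phi where "phi t = inner (E t v) (E t v)" for t
  have "phi s \<le> phi 0"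
  proof (rule DERIV_nonpos_imp_nonincreasing[OF s])
    fix t assume "0 \<le> t" "t \<le> s"
    have d: "(phi has_real_derivative 2 * inner (E t v) (- E t (G v))) (at t)"
      unfolding phi_def by (rule dnormsq[OF E_deriv])
    have "inner (E t v) (- E t (G v)) = - inner (A (E t v)) (E t v)"
      using E_comm[of t v] G_eq[OF E_V[OF v]] by (simp add: inner_commute)
    then have "2 * inner (E t v) (- E t (G v)) \<le> 0" using A_nonneg[OF E_V[OF v]] by simp
    then show "\<exists>y. (phi has_real_derivative y) (at t) \<and> y \<le> 0" using d by blast
  qed
  then have "(norm (E s v))\<^sup>2 \<le> (norm v)\<^sup>2" unfolding phi_def by (simp add: power2_norm_eq_inner Eser_0)
  then show ?thesis using power2_le_imp_le norm_ge_zero by blast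
qed

lemma E_lip: assumes w: "w \<in> V" and s: "s \<ge> 0" shows "norm (E s w - w) \<le> s * norm (A w)"
proof -
  have "norm ((\<lambda>t. E t w) s - (\<lambda>t. E t w) 0) \<le> norm (A w) * norm (s - 0)"
  proof (rule differentiable_bound[where S="{0..s}" and f'="\<lambda>t h. h *\<^sub>R (- E t (G w))"])
    show "convex {0..s}" by simp
    show "((\<lambda>t. E t w) has_derivative (\<lambda>h. h *\<^sub>R (- E t (G w)))) (at t within {0..s})" if "t \<in> {0..s}" for t
      using E_deriv[of w t] unfolding has_vector_derivative_def by (rule has_derivative_at_withinI)
    show "onorm (\<lambda>h. h *\<^sub>R (- E t (G w))) \<le> norm (A w)" if "t \<in> {0..s}" for t
    proof (rule onorm_bound)
      show "norm (A w) \<ge> 0" by simp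
      fix h :: real
      have "norm (E t (G w)) \<le> norm (A w)"
        using E_contr[OF G_V, of t w] that G_eq[OF w] by simp
      then show "norm (h *\<^sub>R (- E t (G w))) \<le> norm (A w) * norm h"
        by (simp add: mult.commute mult_left_mono)
    qed
  qed (use s in auto)
  then show ?thesis using s by (simp add: Eser_0 mult.commute)
qed

end

context dsys begin

definition Kq :: real where "Kq = cb\<^sup>2 / (2 * ca\<^sup>2)"

lemma Kq_nonneg: "Kq \<ge> 0" unfolding Kq_def by simp

lemma key_ineq:
  assumes t: "t \<ge> 0" and a: "a \<ge> 0" and b: "b \<ge> 0"
  shows "2 * t * (cb * a * b) \<le> 2 * t\<^sup>2 * (ca * b\<^sup>2) + 2 * Kq * (ca * a\<^sup>2)"
proof -
  define X where "X = t * b * ca"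
  define Y where "Y = cb * a"
  have q: "0 \<le> (X - Y)\<^sup>2" by simp
  have x2: "0 \<le> X\<^sup>2" by simp
  have "2 * X * Y \<le> 2 * X\<^sup>2 + Y\<^sup>2"
    using q x2 power2_diff[of X Y] by linarith
  have e1: "ca * (2 * t * (cb * a * b)) = 2 * X * Y" by (simp add: X_def Y_def algebra_simps)
  have kq: "2 * Kq * ca\<^sup>2 = cb\<^sup>2" using ca_pos by (simp add: Kq_def)
  have e2: "ca * (2 * t\<^sup>2 * (ca * b\<^sup>2) + 2 * Kq * (ca * a\<^sup>2)) = 2 * X\<^sup>2 + (2 * Kq * ca\<^sup>2) * a\<^sup>2"
    by (simp add: X_def power2_eq_square algebra_simps)
  have yq: "Y\<^sup>2 = cb\<^sup>2 * a\<^sup>2" by (simp add: Y_def power_mult_distrib)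
  have e3: "2 * X\<^sup>2 + Y\<^sup>2 = ca * (2 * t\<^sup>2 * (ca * b\<^sup>2) + 2 * Kq * (ca * a\<^sup>2))"
    unfolding e2 kq yq ..
  have "ca * (2 * t * (cb * a * b)) \<le> ca * (2 * t\<^sup>2 * (ca * b\<^sup>2) + 2 * Kq * (ca * a\<^sup>2))"
    unfolding e1 e3[symmetric] by fact
  then show ?thesis using ca_pos by simp
qed

lemma E_analytic_sq:
  assumes v: "v \<in> V" and s: "s \<ge> 0"
  shows "(s * norm (A (E s v)))\<^sup>2 \<le> Kq * (norm v)\<^sup>2"
proof -
  define phi1 where "phi1 t = inner (E t v) (E t v)" for t
  define phi2 where "phi2 t = inner (E t (G v)) (E t (G v))" for t
  define psi where "psi t = t\<^sup>2 * phi2 t + Kq * phi1 t" for t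
  have "psi s \<le> psi 0"
  proof (rule DERIV_nonpos_imp_nonincreasing[OF s])
    fix t assume t0: "0 \<le> t" "t \<le> s"
    define u where "u = E t v"
    define z where "z = E t (G v)"
    have uV: "u \<in> V" unfolding u_def by (rule E_V[OF v])
    have zV: "z \<in> V" unfolding z_def by (rule E_V[OF G_V])
    have zu: "z = A u" unfolding z_def u_def using E_comm[of t v] G_eq[OF E_V[OF v]] by simp
    have Gz: "E t (G (G v)) = A z" unfolding z_def using E_comm[of t "G v"] G_eq[OF zV[unfolded z_def]] by simp
    have d1: "(phi1 has_real_derivative 2 * inner u (- E t (G v))) (at t)"
      unfolding phi1_def u_def by (rule dnormsq[OF E_deriv])
    have d2: "(phi2 has_real_derivative 2 * inner z (- E t (G (G v)))) (at t)"
      unfolding phi2_def z_def by (rule dnormsq[OF E_deriv])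
    have dt: "((\<lambda>t. t\<^sup>2) has_real_derivative 2 * t) (at t)"
      by (auto intro!: derivative_eq_intros)
    have dpsi: "(psi has_real_derivative (2 * t * phi2 t + (2 * inner z (- E t (G (G v)))) * t\<^sup>2)
        + Kq * (2 * inner u (- E t (G v)))) (at t)"
      unfolding psi_def
      by (rule DERIV_add[OF DERIV_mult[OF dt d2] DERIV_cmult[OF d1]])
    define a where "a = normV ip u"
    define b where "b = normV ip z"
    have a0: "a \<ge> 0" unfolding a_def using nV_nonneg[OF uV] .
    have b0: "b \<ge> 0" unfolding b_def using nV_nonneg[OF zV] .
    have p2: "phi2 t = inner z z" unfolding phi2_def z_def ..
    have i1: "inner z z \<le> cb * a * b"
      using bnd[OF uV zV] zu unfolding a_def b_def by simp
    have i2: "inner z (A z) \<ge> ca * b\<^sup>2" using coer[OF zV] unfolding b_def by (simp add: inner_commute)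
    have i3: "inner u (A u) \<ge> ca * a\<^sup>2" using coer[OF uV] unfolding a_def by (simp add: inner_commute)
    have "2 * t * phi2 t \<le> 2 * t * (cb * a * b)" unfolding p2 using i1 t0 by (simp add: mult_left_mono)
    also have "\<dots> \<le> 2 * t\<^sup>2 * (ca * b\<^sup>2) + 2 * Kq * (ca * a\<^sup>2)" by (rule key_ineq[OF t0(1) a0 b0])
    also have "\<dots> \<le> 2 * t\<^sup>2 * inner z (A z) + 2 * Kq * inner u (A u)"
      using i2 i3 Kq_nonneg by (intro add_mono mult_left_mono) auto
    finally have fin: "2 * t * phi2 t \<le> 2 * t\<^sup>2 * inner z (A z) + 2 * Kq * inner u (A u)" .
    have r1: "inner z (- E t (G (G v))) = - inner z (A z)" using Gz by simp
    have r2: "inner u (- E t (G v)) = - inner u (A u)" using zu unfolding z_def by simp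
    have "2 * t * phi2 t + (2 * inner z (- E t (G (G v)))) * t\<^sup>2 + Kq * (2 * inner u (- E t (G v)))
        = 2 * t * phi2 t - (2 * t\<^sup>2 * inner z (A z) + 2 * Kq * inner u (A u))"
      unfolding r1 r2 by (simp add: algebra_simps)
    then have "2 * t * phi2 t + (2 * inner z (- E t (G (G v)))) * t\<^sup>2 + Kq * (2 * inner u (- E t (G v))) \<le> 0"
      using fin by linarith
    then show "\<exists>y. (psi has_real_derivative y) (at t) \<and> y \<le> 0" using dpsi by blast
  qed
  moreover have "psi 0 = Kq * (norm v)\<^sup>2" unfolding psi_def phi1_def by (simp add: Eser_0 power2_norm_eq_inner)
  moreover have "psi s \<ge> s\<^sup>2 * (norm (A (E s v)))\<^sup>2"
  proof -
    have "phi2 s = (norm (A (E s v)))\<^sup>2" unfolding phi2_def using E_commA[OF v] G_eq[OF v]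
      by (simp add: power2_norm_eq_inner)
    moreover have "Kq * phi1 s \<ge> 0" unfolding phi1_def using Kq_nonneg by simp
    ultimately show ?thesis unfolding psi_def by simp
  qed
  moreover have "(s * norm (A (E s v)))\<^sup>2 = s\<^sup>2 * (norm (A (E s v)))\<^sup>2" by (rule power_mult_distrib)
  ultimately show ?thesis by linarith
qed

lemma E_analytic:
  assumes v: "v \<in> V" and s: "s \<ge> 0"
  shows "s * norm (A (E s v)) \<le> sqrt Kq * norm v"
proof -
  have eq: "(sqrt Kq * norm v)\<^sup>2 = Kq * (norm v)\<^sup>2"
    using Kq_nonneg by (simp add: power_mult_distrib)
  have "(s * norm (A (E s v)))\<^sup>2 \<le> (sqrt Kq * norm v)\<^sup>2"
    unfolding eq by (rule E_analytic_sq[OF v s])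
  moreover have "0 \<le> sqrt Kq * norm v" using Kq_nonneg by simp
  ultimately show ?thesis by (rule power2_le_imp_le)
qed

lemma A_inj: assumes x: "x \<in> V" and y: "y \<in> V" and e: "A x = A y" shows "x = y"
proof -
  have "A (x - y) = 0" using lin_on_diff[OF linA x y] e by simp
  then have "x - y = 0" using A_inj0[OF Vdiff[OF x y]] by blast
  then show ?thesis by simp
qed

lemma Ainv: assumes y: "y \<in> V" shows "inv_op V A y \<in> V \<and> A (inv_op V A y) = y"
proof (rule inv_op_props)
  have inj: "inj_on G V" unfolding inj_on_def
  proof (intro ballI impI)
    fix x z assume "x \<in> V" "z \<in> V" "G x = G z"
    then show "x = z" using A_inj[of x z] G_eq[of x] G_eq[of z] by simp
  qed
  obtain x where x: "x \<in> V" "G x = y" using fd_surj[OF G_lin VB G_V inj y] by blast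
  show "\<exists>!x. x \<in> V \<and> A x = y"
  proof (rule ex1I[of _ x])
    show "x \<in> V \<and> A x = y" using x G_eq by simp
    fix x' assume "x' \<in> V \<and> A x' = y"
    then show "x' = x" using A_inj[of x' x] x G_eq[of x] by simp
  qed
qed

lemma Ainv_eq: "x \<in> V \<Longrightarrow> inv_op V A (A x) = x"
  by (rule inv_op_eq[where T=A]) (rule A_inj, assumption+, simp_all)

lemma interp:
  assumes v: "v \<in> V"
  shows "(norm v)\<^sup>2 \<le> (cb / ca)\<^sup>2 * (norm (inv_op V A v) * norm (A v))"
proof (cases "v = 0")
  case True then show ?thesis by simp
next
  case False
  define w where "w = inv_op V A v"
  have wV: "w \<in> V" and Aw: "A w = v" using Ainv[OF v] unfolding w_def by auto
  define a where "a = normV ip w"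
  define b where "b = normV ip v"
  have a0: "a \<ge> 0" unfolding a_def using nV_nonneg[OF wV] .
  have b0: "b \<ge> 0" unfolding b_def using nV_nonneg[OF v] .
  have h1: "(norm v)\<^sup>2 \<le> cb * a * b"
    using bnd[OF wV v] Aw unfolding a_def b_def by (simp add: power2_norm_eq_inner)
  have h2: "ca * a\<^sup>2 \<le> norm v * norm w"
    using coer[OF wV] Aw Cauchy_Schwarz_ineq2[of v w] unfolding a_def by simp
  have h3: "ca * b\<^sup>2 \<le> norm (A v) * norm v"
    using coer[OF v] Cauchy_Schwarz_ineq2[of "A v" v] unfolding b_def by simp
  have "((norm v)\<^sup>2)\<^sup>2 \<le> (cb * a * b)\<^sup>2" by (rule power_mono[OF h1]) simp
  then have "ca\<^sup>2 * ((norm v)\<^sup>2)\<^sup>2 \<le> ca\<^sup>2 * (cb * a * b)\<^sup>2"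
    by (rule mult_left_mono) simp
  also have "ca\<^sup>2 * (cb * a * b)\<^sup>2 = cb\<^sup>2 * ((ca * a\<^sup>2) * (ca * b\<^sup>2))"
    by (simp add: power_mult_distrib power2_eq_square)
  also have "\<dots> \<le> cb\<^sup>2 * ((norm v * norm w) * (norm (A v) * norm v))"
  proof (rule mult_left_mono)
    show "(ca * a\<^sup>2) * (ca * b\<^sup>2) \<le> (norm v * norm w) * (norm (A v) * norm v)"
      by (rule mult_mono[OF h2 h3]) (use ca_pos in auto)
  qed simp
  finally have "ca\<^sup>2 * (norm v)\<^sup>2 * (norm v)\<^sup>2 \<le> cb\<^sup>2 * (norm w * norm (A v)) * (norm v)\<^sup>2"
    by (simp add: power2_eq_square algebra_simps)
  then have "ca\<^sup>2 * (norm v)\<^sup>2 \<le> cb\<^sup>2 * (norm w * norm (A v))"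
    using False by simp
  then have "(norm v)\<^sup>2 \<le> cb\<^sup>2 * (norm w * norm (A v)) / ca\<^sup>2"
    using ca_pos by (simp add: pos_le_divide_eq mult.commute)
  then show ?thesis unfolding w_def[symmetric] by (simp add: power_divide)
qed

end

context dsys begin

lemma shift_hom0:
  assumes lT: "lin_on V T" and aT: "\<And>v. v \<in> V \<Longrightarrow> inner (T v) v \<ge> 0" and tau: "\<tau> \<ge> 0"
    and d: "d \<in> V" and e: "d + \<tau> *\<^sub>R T d = 0"
  shows "d = 0"
proof -
  have "0 = inner (d + \<tau> *\<^sub>R T d) d" using e by simp
  also have "\<dots> = inner d d + \<tau> * inner (T d) d" by (simp add: inner_add_left)
  finally have "inner d d \<le> 0" using aT[OF d] tau by (smt (verit) mult_nonneg_nonneg)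
  then show ?thesis by (metis inner_eq_zero_iff inner_ge_zero order_antisym)
qed

lemma shift_uniq:
  assumes lT: "lin_on V T" and aT: "\<And>v. v \<in> V \<Longrightarrow> inner (T v) v \<ge> 0" and tau: "\<tau> \<ge> 0"
    and w: "w \<in> V" "w' \<in> V" and e: "w + \<tau> *\<^sub>R T w = w' + \<tau> *\<^sub>R T w'"
  shows "w = w'"
proof -
  have td: "T (w - w') = T w - T w'" by (rule lin_on_diff[OF lT w])
  have "(w - w') + \<tau> *\<^sub>R T (w - w') = (w + \<tau> *\<^sub>R T w) - (w' + \<tau> *\<^sub>R T w')"
    unfolding td by (simp add: algebra_simps)
  also have "\<dots> = 0" using e by simp
  finally have "(w - w') + \<tau> *\<^sub>R T (w - w') = 0" .
  then have "w - w' = 0" using shift_hom0[OF lT aT tau Vdiff[OF w(1) w(2)]] by blast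
  then show ?thesis by simp
qed

lemma shift_props:
  assumes lT: "lin_on V T" and TV: "\<And>v. v \<in> V \<Longrightarrow> T v \<in> V"
    and aT: "\<And>v. v \<in> V \<Longrightarrow> inner (T v) v \<ge> 0" and tau: "\<tau> \<ge> 0" and v: "v \<in> V"
  shows "shift_inv V T \<tau> v \<in> V \<and> shift_inv V T \<tau> v + \<tau> *\<^sub>R T (shift_inv V T \<tau> v) = v"
proof -
  define g where "g x = P x + \<tau> *\<^sub>R T (P x)" for x
  have glin: "linear g"
  proof (rule linearI)
    show "g (x + y) = g x + g y" for x y
      unfolding g_def P_add lin_on_add[OF lT P_in P_in] by (simp add: algebra_simps)
    show "g (c *\<^sub>R x) = c *\<^sub>R g x" for c x
      unfolding g_def P_scale lin_on_scale[OF lT P_in] by (simp add: algebra_simps)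
  qed
  have gV: "g x \<in> V" for x unfolding g_def using Vadd Vscale P_in TV by blast
  have ginj: "inj_on g V" unfolding inj_on_def
  proof (intro ballI impI)
    fix x y assume "x \<in> V" "y \<in> V" "g x = g y"
    then show "x = y" using shift_uniq[OF lT aT tau, of x y] P_id unfolding g_def by simp
  qed
  obtain x where x: "x \<in> V" "g x = v" using fd_surj[OF glin VB gV ginj v] by blast
  have ex: "\<exists>!w. w \<in> V \<and> w + \<tau> *\<^sub>R T w = v"
  proof (rule ex1I[of _ x])
    show "x \<in> V \<and> x + \<tau> *\<^sub>R T x = v" using x P_id unfolding g_def by simp
    fix w assume "w \<in> V \<and> w + \<tau> *\<^sub>R T w = v"
    then show "w = x" using shift_uniq[OF lT aT tau, of w x] x P_id unfolding g_def by simp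
  qed
  show ?thesis unfolding shift_inv_def using theI'[OF ex] .
qed

lemma shift_eq:
  assumes lT: "lin_on V T" and aT: "\<And>v. v \<in> V \<Longrightarrow> inner (T v) v \<ge> 0" and tau: "\<tau> \<ge> 0"
    and w: "w \<in> V" and e: "w + \<tau> *\<^sub>R T w = v"
  shows "shift_inv V T \<tau> v = w"
  unfolding shift_inv_def
proof (rule the_equality)
  show "w \<in> V \<and> w + \<tau> *\<^sub>R T w = v" using w e by simp
  fix w' assume "w' \<in> V \<and> w' + \<tau> *\<^sub>R T w' = v"
  then show "w' = w" using shift_uniq[OF lT aT tau, of w' w] w e by simp
qed

lemma shift_contr:
  assumes lT: "lin_on V T" and TV: "\<And>v. v \<in> V \<Longrightarrow> T v \<in> V"
    and aT: "\<And>v. v \<in> V \<Longrightarrow> inner (T v) v \<ge> 0" and tau: "\<tau> \<ge> 0" and v: "v \<in> V"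
  shows "norm (shift_inv V T \<tau> v) \<le> norm v"
proof -
  define w where "w = shift_inv V T \<tau> v"
  have wV: "w \<in> V" and we: "w + \<tau> *\<^sub>R T w = v" using shift_props[OF lT TV aT tau v] unfolding w_def by auto
  have "(norm w)\<^sup>2 = inner v w - \<tau> * inner (T w) w"
    unfolding power2_norm_eq_inner we[symmetric] by (simp add: inner_add_left)
  also have "\<dots> \<le> inner v w" using aT[OF wV] tau by simp
  also have "\<dots> \<le> norm v * norm w" by (rule norm_cauchy_schwarz)
  finally have "(norm w)\<^sup>2 \<le> norm v * norm w" .
  then have "norm w \<le> norm v"
    by (cases "norm w = 0") (simp_all add: power2_eq_square)
  then show ?thesis unfolding w_def .
qed

lemma shift_add:
  assumes lT: "lin_on V T" and TV: "\<And>v. v \<in> V \<Longrightarrow> T v \<in> V"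
    and aT: "\<And>v. v \<in> V \<Longrightarrow> inner (T v) v \<ge> 0" and tau: "\<tau> \<ge> 0" and a: "a \<in> V" and b: "b \<in> V"
  shows "shift_inv V T \<tau> (a + b) = shift_inv V T \<tau> a + shift_inv V T \<tau> b"
proof (rule shift_eq[OF lT aT tau])
  note pa = shift_props[OF lT TV aT tau a] and pb = shift_props[OF lT TV aT tau b]
  show "shift_inv V T \<tau> a + shift_inv V T \<tau> b \<in> V" using pa pb Vadd by blast
  show "shift_inv V T \<tau> a + shift_inv V T \<tau> b + \<tau> *\<^sub>R T (shift_inv V T \<tau> a + shift_inv V T \<tau> b) = a + b"
    using pa pb lin_on_add[OF lT, of "shift_inv V T \<tau> a" "shift_inv V T \<tau> b"]
    by (simp add: algebra_simps)
qed

lemma shift_scale: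
  assumes lT: "lin_on V T" and TV: "\<And>v. v \<in> V \<Longrightarrow> T v \<in> V"
    and aT: "\<And>v. v \<in> V \<Longrightarrow> inner (T v) v \<ge> 0" and tau: "\<tau> \<ge> 0" and a: "a \<in> V"
  shows "shift_inv V T \<tau> (c *\<^sub>R a) = c *\<^sub>R shift_inv V T \<tau> a"
proof (rule shift_eq[OF lT aT tau])
  note pa = shift_props[OF lT TV aT tau a]
  show "c *\<^sub>R shift_inv V T \<tau> a \<in> V" using pa Vscale by blast
  have ls: "T (c *\<^sub>R shift_inv V T \<tau> a) = c *\<^sub>R T (shift_inv V T \<tau> a)"
    using pa lin_on_scale[OF lT, of "shift_inv V T \<tau> a" c] by simp
  have "c *\<^sub>R shift_inv V T \<tau> a + \<tau> *\<^sub>R T (c *\<^sub>R shift_inv V T \<tau> a)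
      = c *\<^sub>R (shift_inv V T \<tau> a + \<tau> *\<^sub>R T (shift_inv V T \<tau> a))"
    unfolding ls scaleR_add_right scaleR_scaleR by (simp add: mult.commute)
  then show "c *\<^sub>R shift_inv V T \<tau> a + \<tau> *\<^sub>R T (c *\<^sub>R shift_inv V T \<tau> a) = c *\<^sub>R a"
    using pa by simp
qed

lemma shift_comm:
  assumes lT: "lin_on V T" and TV: "\<And>v. v \<in> V \<Longrightarrow> T v \<in> V"
    and aT: "\<And>v. v \<in> V \<Longrightarrow> inner (T v) v \<ge> 0" and tau: "\<tau> \<ge> 0" and v: "v \<in> V"
  shows "T (shift_inv V T \<tau> v) = shift_inv V T \<tau> (T v)"
proof -
  note p = shift_props[OF lT TV aT tau v]
  define w where "w = shift_inv V T \<tau> v"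
  have wV: "w \<in> V" using p w_def by simp
  have "T w + \<tau> *\<^sub>R T (T w) = T (w + \<tau> *\<^sub>R T w)"
    using lin_on_add[OF lT wV Vscale[OF TV[OF wV]]] lin_on_scale[OF lT TV[OF wV]] by simp
  also have "\<dots> = T v" using p w_def by simp
  finally have e: "T w + \<tau> *\<^sub>R T (T w) = T v" .
  have "shift_inv V T \<tau> (T v) = T w" using shift_eq[OF lT aT tau TV[OF wV] e] .
  then show ?thesis unfolding w_def by simp
qed

lemmas A1props = linA1 A1V acc1
lemmas A2props = linA2 A2V acc2

definition Sop :: "real \<Rightarrow> 'a \<Rightarrow> 'a" where
  "Sop \<tau> v = E \<tau> v + \<tau> *\<^sub>R A2 (E \<tau> v) - shift_inv V A1 \<tau> v"

lemma expr_eq: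
  assumes v: "v \<in> V" and tau: "\<tau> \<ge> 0"
  shows "(let w = semigroup_op A \<tau> v - shift_inv V A2 \<tau> (shift_inv V A1 \<tau> v) in w + \<tau> *\<^sub>R A2 w) = Sop \<tau> v"
proof -
  note p1 = shift_props[OF A1props tau v]
  define r where "r = shift_inv V A1 \<tau> v"
  have rV: "r \<in> V" using p1 r_def by simp
  note p2 = shift_props[OF A2props tau rV]
  define q where "q = shift_inv V A2 \<tau> r"
  have qV: "q \<in> V" and qe: "q + \<tau> *\<^sub>R A2 q = r" using p2 q_def by auto
  have EV: "E \<tau> v \<in> V" by (rule E_V[OF v])
  have d: "A2 (E \<tau> v - q) = A2 (E \<tau> v) - A2 q" by (rule lin_on_diff[OF linA2 EV qV])
  have "(E \<tau> v - q) + \<tau> *\<^sub>R A2 (E \<tau> v - q) = E \<tau> v + \<tau> *\<^sub>R A2 (E \<tau> v) - (q + \<tau> *\<^sub>R A2 q)"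
    unfolding d by (simp add: algebra_simps)
  also have "\<dots> = Sop \<tau> v" unfolding Sop_def qe r_def ..
  finally have fin: "(E \<tau> v - q) + \<tau> *\<^sub>R A2 (E \<tau> v - q) = Sop \<tau> v" .
  show ?thesis unfolding Let_def semigroup_eq[OF v] r_def[symmetric] q_def[symmetric] by (rule fin)
qed

lemma Sop_add: assumes a: "a \<in> V" and b: "b \<in> V" and tau: "\<tau> \<ge> 0"
  shows "Sop \<tau> (a + b) = Sop \<tau> a + Sop \<tau> b"
  unfolding Sop_def E_add
  by (simp add: lin_on_add[OF linA2 E_V[OF a] E_V[OF b]] shift_add[OF A1props tau a b] algebra_simps)

lemma Sop_scale: assumes a: "a \<in> V" and tau: "\<tau> \<ge> 0"
  shows "Sop \<tau> (c *\<^sub>R a) = c *\<^sub>R Sop \<tau> a"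
  unfolding Sop_def E_scale
  by (simp add: lin_on_scale[OF linA2 E_V[OF a]] shift_scale[OF A1props tau a] algebra_simps)

lemma Sop_diff: assumes a: "a \<in> V" and b: "b \<in> V" and tau: "\<tau> \<ge> 0"
  shows "Sop \<tau> (a - b) = Sop \<tau> a - Sop \<tau> b"
proof -
  have "Sop \<tau> (a - b) = Sop \<tau> (a + (-1) *\<^sub>R b)" by simp
  also have "\<dots> = Sop \<tau> a + (-1) *\<^sub>R Sop \<tau> b"
    by (simp only: Sop_add[OF a Vscale[OF b] tau] Sop_scale[OF b tau])
  finally show ?thesis by simp
qed

lemma R1_diff: assumes v: "v \<in> V" and tau: "\<tau> \<ge> 0"
  shows "v - shift_inv V A1 \<tau> v = \<tau> *\<^sub>R shift_inv V A1 \<tau> (A1 v)"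
  using shift_props[OF A1props tau v] shift_comm[OF A1props tau v] by (metis add_diff_cancel_left')

lemma Sop_b0:
  assumes v: "v \<in> V" and tau: "\<tau> \<ge> 0" and K2: "\<And>u. u \<in> V \<Longrightarrow> norm (A2 u) \<le> K2 * norm (A u)" and K20: "K2 \<ge> 0"
  shows "norm (Sop \<tau> v) \<le> (2 + K2 * sqrt Kq) * norm v"
proof -
  have n1: "norm (E \<tau> v) \<le> norm v" by (rule E_contr[OF v tau])
  have "norm (\<tau> *\<^sub>R A2 (E \<tau> v)) = \<tau> * norm (A2 (E \<tau> v))" using tau by simp
  also have "\<dots> \<le> \<tau> * (K2 * norm (A (E \<tau> v)))" using K2[OF E_V[OF v]] tau by (simp add: mult_left_mono)
  also have "\<dots> = K2 * (\<tau> * norm (A (E \<tau> v)))" by simp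
  also have "\<dots> \<le> K2 * (sqrt Kq * norm v)" using E_analytic[OF v tau] K20 by (simp add: mult_left_mono)
  finally have n2: "norm (\<tau> *\<^sub>R A2 (E \<tau> v)) \<le> K2 * sqrt Kq * norm v" by simp
  have n3: "norm (shift_inv V A1 \<tau> v) \<le> norm v" by (rule shift_contr[OF A1props tau v])
  have "norm (Sop \<tau> v) \<le> norm (E \<tau> v) + norm (\<tau> *\<^sub>R A2 (E \<tau> v)) + norm (shift_inv V A1 \<tau> v)"
    unfolding Sop_def by (meson norm_triangle_ineq norm_triangle_ineq4 order_trans add_mono order_refl)
  also have "\<dots> \<le> norm v + K2 * sqrt Kq * norm v + norm v" using n1 n2 n3 by linarith
  finally show ?thesis by (simp add: algebra_simps)
qed

lemma Sop_b1:
  assumes v: "v \<in> V" and tau: "\<tau> \<ge> 0"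
    and K1: "\<And>u. u \<in> V \<Longrightarrow> norm (A1 u) \<le> K1 * norm (A u)"
    and K2: "\<And>u. u \<in> V \<Longrightarrow> norm (A2 u) \<le> K2 * norm (A u)"
  shows "norm (Sop \<tau> v) \<le> \<tau> * (1 + K2 + K1) * norm (A v)"
proof -
  have AvV: "A v \<in> V" by (rule AV[OF v])
  have eq: "Sop \<tau> v = (E \<tau> v - v) + \<tau> *\<^sub>R A2 (E \<tau> v) + (v - shift_inv V A1 \<tau> v)"
    unfolding Sop_def by simp
  have n1: "norm (E \<tau> v - v) \<le> \<tau> * norm (A v)" by (rule E_lip[OF v tau])
  have "norm (A2 (E \<tau> v)) \<le> K2 * norm (A (E \<tau> v))" by (rule K2[OF E_V[OF v]])
  also have "\<dots> = K2 * norm (E \<tau> (A v))" using E_commA[OF v] by simp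
  also have "\<dots> \<le> K2 * norm (A v)"
  proof -
    have "K2 \<ge> 0 \<or> A v = 0" 
    proof (cases "A v = 0")
      case False
      then have "norm (A v) > 0" by simp
      have "norm (A2 v) \<le> K2 * norm (A v)" by (rule K2[OF v])
      then have "0 \<le> K2 * norm (A v)" using norm_ge_zero order_trans by blast
      then show ?thesis using \<open>norm (A v) > 0\<close> by (simp add: zero_le_mult_iff)
    qed simp
    then show ?thesis
    proof
      assume "K2 \<ge> 0" then show ?thesis using E_contr[OF AvV tau] by (simp add: mult_left_mono)
    next
      assume "A v = 0" then show ?thesis using linear_0[OF E_lin] by simp
    qed
  qed
  finally have n2: "norm (\<tau> *\<^sub>R A2 (E \<tau> v)) \<le> \<tau> * (K2 * norm (A v))" using tau by (simp add: mult_left_mono)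
  have "norm (v - shift_inv V A1 \<tau> v) = \<tau> * norm (shift_inv V A1 \<tau> (A1 v))" using R1_diff[OF v tau] tau by simp
  also have "\<dots> \<le> \<tau> * norm (A1 v)" using shift_contr[OF A1props tau A1V[OF v]] tau by (simp add: mult_left_mono)
  also have "\<dots> \<le> \<tau> * (K1 * norm (A v))" using K1[OF v] tau by (simp add: mult_left_mono)
  finally have n3: "norm (v - shift_inv V A1 \<tau> v) \<le> \<tau> * (K1 * norm (A v))" .
  have "norm (Sop \<tau> v) \<le> norm (E \<tau> v - v) + norm (\<tau> *\<^sub>R A2 (E \<tau> v)) + norm (v - shift_inv V A1 \<tau> v)"
    unfolding eq by (meson norm_triangle_ineq order_trans add_mono order_refl)
  also have "\<dots> \<le> \<tau> * norm (A v) + \<tau> * (K2 * norm (A v)) + \<tau> * (K1 * norm (A v))" using n1 n2 n3 by linarith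
  finally show ?thesis by (simp add: algebra_simps)
qed

lemma Sop_b2:
  assumes v: "v \<in> V" and tau: "\<tau> \<ge> 0"
  shows "norm (Sop \<tau> v) \<le> 4 * \<tau> * ce * norm v"
proof -
  have eq: "Sop \<tau> v = (E \<tau> v - v) + \<tau> *\<^sub>R A2 (E \<tau> v) + (v - shift_inv V A1 \<tau> v)"
    unfolding Sop_def by simp
  have "norm (E \<tau> v - v) \<le> \<tau> * norm (A v)" by (rule E_lip[OF v tau])
  also have "\<dots> \<le> \<tau> * (2 * ce * norm v)" using A_bound[OF v] tau by (simp add: mult_left_mono)
  finally have n1: "norm (E \<tau> v - v) \<le> \<tau> * (2 * ce * norm v)" .
  have "norm (\<tau> *\<^sub>R A2 (E \<tau> v)) = \<tau> * norm (A2 (E \<tau> v))" using tau by simp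
  also have "\<dots> \<le> \<tau> * (ce * norm (E \<tau> v))" using A2_bound[OF E_V[OF v]] tau by (simp add: mult_left_mono)
  also have "\<dots> \<le> \<tau> * (ce * norm v)" using E_contr[OF v tau] tau ce0 by (simp add: mult_left_mono)
  finally have n2: "norm (\<tau> *\<^sub>R A2 (E \<tau> v)) \<le> \<tau> * (ce * norm v)" .
  note p1 = shift_props[OF A1props tau v]
  have "v - shift_inv V A1 \<tau> v = \<tau> *\<^sub>R A1 (shift_inv V A1 \<tau> v)" using p1 by (metis add_diff_cancel_left')
  then have "norm (v - shift_inv V A1 \<tau> v) = \<tau> * norm (A1 (shift_inv V A1 \<tau> v))" using tau by simp
  also have "\<dots> \<le> \<tau> * (ce * norm (shift_inv V A1 \<tau> v))" using A1_bound p1 tau by (simp add: mult_left_mono)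
  also have "\<dots> \<le> \<tau> * (ce * norm v)" using shift_contr[OF A1props tau v] tau ce0 by (simp add: mult_left_mono)
  finally have n3: "norm (v - shift_inv V A1 \<tau> v) \<le> \<tau> * (ce * norm v)" .
  have "norm (Sop \<tau> v) \<le> norm (E \<tau> v - v) + norm (\<tau> *\<^sub>R A2 (E \<tau> v)) + norm (v - shift_inv V A1 \<tau> v)"
    unfolding eq by (meson norm_triangle_ineq order_trans add_mono order_refl)
  also have "\<dots> \<le> \<tau> * (2 * ce * norm v) + \<tau> * (ce * norm v) + \<tau> * (ce * norm v)" using n1 n2 n3 by linarith
  finally show ?thesis by (simp add: algebra_simps)
qed

end

lemma cshift_real:
  assumes lA: "lin_on D A"
  shows "cshift A (complex_of_real (- t)) (x, 0) = (A x + t *\<^sub>R x, 0)"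
  using lin_on_0[OF lA] by (simp add: cshift_def)

lemma res_basic:
  fixes A :: "'a::real_normed_vector \<Rightarrow> 'a"
  assumes lA: "lin_on D A" and rs: "in_resolvent_set D A (complex_of_real (- t))"
  shows "\<exists>!x. x \<in> D \<and> A x + t *\<^sub>R x = y"
proof -
  have D0: "0 \<in> D" using lin_on_subspace[OF lA] subspace_0 by blast
  obtain p where p: "p \<in> D \<times> D" "cshift A (complex_of_real (- t)) p = (y, 0)"
    and pu: "\<And>p'. p' \<in> D \<times> D \<Longrightarrow> cshift A (complex_of_real (- t)) p' = (y, 0) \<Longrightarrow> p' = p"
    using rs unfolding in_resolvent_set_def by metis
  have uniq: "x = fst p" if "x \<in> D" "A x + t *\<^sub>R x = y" for x
  proof -
    have "(x, 0) = p" by (rule pu) (use that D0 cshift_real[OF lA] in auto)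
    then show ?thesis by auto
  qed
  have ex: "fst p \<in> D \<and> A (fst p) + t *\<^sub>R fst p = y"
    using p by (cases p) (simp add: cshift_def)
  show ?thesis using ex uniq by blast
qed

lemma res_norm:
  fixes A :: "'a::real_normed_vector \<Rightarrow> 'a"
  assumes lA: "lin_on D A" and x: "x \<in> D"
    and b: "\<forall>p\<in>D \<times> D. c * norm p \<le> M * norm (cshift A (complex_of_real (- t)) p)"
  shows "c * norm x \<le> M * norm (A x + t *\<^sub>R x)"
proof -
  have D0: "0 \<in> D" using lin_on_subspace[OF lA] subspace_0 by blast
  have "c * norm (x, 0::'a) \<le> M * norm (cshift A (complex_of_real (- t)) (x, 0))" using b x D0 by blast
  then show ?thesis unfolding cshift_real[OF lA] by (simp add: norm_prod_def)
qed

lemma the_unique: "\<exists>!x. P x \<Longrightarrow> P x \<Longrightarrow> (THE x. P x) = x" by blast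

locale gsys =
  fixes D D1 D2 :: "'a::{real_inner, complete_space} set"
    and A A1 A2 :: "'a \<Rightarrow> 'a"
    and I :: "real set"
    and V :: "real \<Rightarrow> 'a set"
    and P :: "real \<Rightarrow> 'a \<Rightarrow> 'a"
    and ipV :: "real \<Rightarrow> 'a \<Rightarrow> 'a \<Rightarrow> real"
    and Ah Ah1 Ah2 :: "real \<Rightarrow> 'a \<Rightarrow> 'a"
  assumes cA: "condA D A D1 A1 D2 A2"
    and cP: "condP I V P D A"
    and cAh: "condAh I V P ipV Ah Ah1 Ah2 D A A1 A2"
begin

lemma linA: "lin_on D A" using cA unfolding condA_def by blast
lemma subD: "subspace D" using linA lin_on_subspace by blast

lemma inv_ex: "\<exists>!x. x \<in> D \<and> A x = y"
proof -
  have "in_resolvent_set D A 0" using cA unfolding condA_def by blast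
  then have "in_resolvent_set D A (complex_of_real (- 0))" by simp
  from res_basic[OF linA this, of y] show ?thesis by simp
qed

lemma inv_props: "inv_op D A y \<in> D \<and> A (inv_op D A y) = y"
  by (rule inv_op_props[OF inv_ex])

lemma inv_eq: "x \<in> D \<Longrightarrow> A x = y \<Longrightarrow> inv_op D A y = x"
  unfolding inv_op_def using inv_ex by (intro the_unique) auto

lemma inv_bound: "\<exists>M. \<forall>y. norm (inv_op D A y) \<le> M * norm y"
proof -
  have "in_resolvent_set D A 0" using cA unfolding condA_def by blast
  then obtain M where M: "\<forall>p\<in>D \<times> D. norm p \<le> M * norm (cshift A 0 p)"
    unfolding in_resolvent_set_def by blast
  have "\<forall>p\<in>D \<times> D. 1 * norm p \<le> M * norm (cshift A (complex_of_real (- 0)) p)" using M by simp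
  from res_norm[OF linA _ this] have nx: "norm x \<le> M * norm (A x)" if "x \<in> D" for x using that by simp
  have "norm (inv_op D A y) \<le> M * norm y" for y
  proof -
    have "norm (inv_op D A y) \<le> M * norm (A (inv_op D A y))" by (rule nx) (use inv_props in blast)
    then show ?thesis using inv_props[of y] by simp
  qed
  then show ?thesis by blast
qed

lemma res_ex: assumes t: "t > 0" shows "\<exists>!x. x \<in> D \<and> A x + t *\<^sub>R x = y"
proof -
  obtain \<phi> where phi: "0 < \<phi>" "\<phi> < pi / 2" and
    S: "\<exists>C. \<forall>z. \<phi> < \<bar>Arg z\<bar> \<longrightarrow> in_resolvent_set D A z \<and>
           (\<forall>p\<in>D \<times> D. cmod z * norm p \<le> C * norm (cshift A z p))"
    using cA unfolding condA_def by blast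
  have a: "Arg (complex_of_real (- t)) = pi" using t Arg_of_real[of "- t"] by simp
  have "\<phi> < \<bar>Arg (complex_of_real (- t))\<bar>" unfolding a using phi pi_gt_zero by simp
  then have "in_resolvent_set D A (complex_of_real (- t))" using S by blast
  then show ?thesis by (rule res_basic[OF linA])
qed

lemma res_props: "t > 0 \<Longrightarrow> res_op D A t y \<in> D \<and> A (res_op D A t y) + t *\<^sub>R res_op D A t y = y"
  unfolding res_op_def using theI'[OF res_ex] by blast

lemma res_bound: "\<exists>Cs\<ge>0. \<forall>t>0. \<forall>x\<in>D. t * norm x \<le> Cs * norm (A x + t *\<^sub>R x)"
proof -
  obtain \<phi> C where phi: "0 < \<phi>" "\<phi> < pi / 2" and
    S: "\<And>z. \<phi> < \<bar>Arg z\<bar> \<Longrightarrow> in_resolvent_set D A z \<and>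
           (\<forall>p\<in>D \<times> D. cmod z * norm p \<le> C * norm (cshift A z p))"
    using cA unfolding condA_def by metis
  have b: "t * norm x \<le> C * norm (A x + t *\<^sub>R x)" if t: "t > 0" and x: "x \<in> D" for t x
  proof -
    have a: "Arg (complex_of_real (- t)) = pi" using t Arg_of_real[of "- t"] by simp
    have "\<phi> < \<bar>Arg (complex_of_real (- t))\<bar>" unfolding a using phi pi_gt_zero by simp
    then have "\<forall>p\<in>D \<times> D. cmod (complex_of_real (- t)) * norm p \<le> C * norm (cshift A (complex_of_real (- t)) p)"
      using S by blast
    moreover have "cmod (complex_of_real (- t)) = t" using t by (simp only: norm_of_real)
    ultimately have "\<forall>p\<in>D \<times> D. t * norm p \<le> C * norm (cshift A (complex_of_real (- t)) p)"
      by simp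
    from res_norm[OF linA x this] show ?thesis .
  qed
  have "t * norm x \<le> \<bar>C\<bar> * norm (A x + t *\<^sub>R x)" if "t > 0" "x \<in> D" for t x
  proof -
    have "C * norm (A x + t *\<^sub>R x) \<le> \<bar>C\<bar> * norm (A x + t *\<^sub>R x)"
      by (rule mult_right_mono) simp_all
    then show ?thesis using b[OF that] by linarith
  qed
  then show ?thesis by (intro exI[of _ "\<bar>C\<bar>"]) auto
qed

end

locale gsys2 = gsys +
  fixes ca cb Ce Cf Cg Cp :: real and Bs :: "real \<Rightarrow> 'a::{real_inner,complete_space} set"
  assumes ca_pos: "ca > 0" and Ce0: "Ce \<ge> 0" and Cf0: "Cf \<ge> 0" and Cg0: "Cg \<ge> 0" and Cp0: "Cp \<ge> 0"
    and ds: "\<And>h. h \<in> I \<Longrightarrow> dsys (V h) (P h) (Ah h) (Ah1 h) (Ah2 h) (ipV h) (Bs h) ca cb (Ce / h\<^sup>2)"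
    and f1: "\<And>h v. h \<in> I \<Longrightarrow> v \<in> D \<Longrightarrow> norm (P h (A1 v) - Ah1 h (P h v)) \<le> Cf * norm (A v)"
    and f2: "\<And>h v. h \<in> I \<Longrightarrow> v \<in> D \<Longrightarrow> norm (P h (A2 v) - Ah2 h (P h v)) \<le> Cf * norm (A v)"
    and gg: "\<And>h x. h \<in> I \<Longrightarrow> norm (inv_op D A x - inv_op (V h) (Ah h) (P h x)) \<le> Cg * h\<^sup>2 * norm x"
    and pp: "\<And>h v. h \<in> I \<Longrightarrow> v \<in> D \<Longrightarrow> norm (v - P h v) \<le> Cp * h\<^sup>2 * norm (A v)"
    and hpos: "\<And>h. h \<in> I \<Longrightarrow> h > 0"

lemma le_abs_mult: "norm (x::'b::real_normed_vector) \<le> c * y \<Longrightarrow> y \<ge> 0 \<Longrightarrow> norm x \<le> \<bar>c\<bar> * y"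
  by (smt (verit, best) abs_ge_self mult_right_mono)

lemma (in gsys) exists_gsys2:
  "\<exists>ca cb Ce Cf Cg Cp Bs. gsys2 D D1 D2 A A1 A2 I V P ipV Ah Ah1 Ah2 ca cb Ce Cf Cg Cp Bs"
proof -
  from cP have I0: "I \<subseteq> {0<..}"
    and Ph: "\<And>h. h \<in> I \<Longrightarrow> subspace (V h) \<and> (\<exists>B. finite B \<and> V h = span B) \<and>
        bounded_linear (P h) \<and> (\<forall>x. P h x \<in> V h) \<and> (\<forall>v\<in>V h. P h v = v)"
    and Cp: "\<exists>C. \<forall>h\<in>I. \<forall>v\<in>D. norm (v - P h v) \<le> C * h\<^sup>2 * norm (A v)"
    unfolding condP_def by blast+
  from cAh have Ah0: "\<And>h. h \<in> I \<Longrightarrow> inner_on (V h) (ipV h) \<and>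
        lin_on (V h) (Ah h) \<and> lin_on (V h) (Ah1 h) \<and> lin_on (V h) (Ah2 h) \<and>
        (\<forall>v\<in>V h. Ah h v \<in> V h \<and> Ah1 h v \<in> V h \<and> Ah2 h v \<in> V h)"
    and ca: "\<exists>C>0. \<forall>h\<in>I. \<forall>v\<in>V h. inner (Ah h v) v \<ge> C * (normV (ipV h) v)\<^sup>2"
    and cb: "\<exists>C. \<forall>h\<in>I. \<forall>v\<in>V h. \<forall>w\<in>V h.
        \<bar>inner (Ah h v) w\<bar> \<le> C * normV (ipV h) v * normV (ipV h) w"
    and cc: "\<And>h v. h \<in> I \<Longrightarrow> v \<in> V h \<Longrightarrow> Ah h v = Ah1 h v + Ah2 h v"
    and cd: "\<And>h v. h \<in> I \<Longrightarrow> v \<in> V h \<Longrightarrow> inner (Ah1 h v) v \<ge> 0 \<and> inner (Ah2 h v) v \<ge> 0"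
    and ce: "\<exists>C. \<forall>h\<in>I. \<forall>x. norm (Ah1 h (P h x)) \<le> C / h\<^sup>2 * norm x \<and>
                     norm (Ah2 h (P h x)) \<le> C / h\<^sup>2 * norm x"
    and cf: "\<exists>C. \<forall>h\<in>I. \<forall>v\<in>D. norm (P h (A1 v) - Ah1 h (P h v)) \<le> C * norm (A v) \<and>
                      norm (P h (A2 v) - Ah2 h (P h v)) \<le> C * norm (A v)"
    and cg: "\<exists>C. \<forall>h\<in>I. \<forall>x. norm (inv_op D A x - inv_op (V h) (Ah h) (P h x)) \<le> C * h\<^sup>2 * norm x"
    unfolding condAh_def by blast+
  obtain ca where ca: "ca > 0" "\<And>h v. h \<in> I \<Longrightarrow> v \<in> V h \<Longrightarrow> inner (Ah h v) v \<ge> ca * (normV (ipV h) v)\<^sup>2"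
    using ca by blast
  obtain cb where cb: "\<And>h v w. h \<in> I \<Longrightarrow> v \<in> V h \<Longrightarrow> w \<in> V h \<Longrightarrow>
      \<bar>inner (Ah h v) w\<bar> \<le> cb * normV (ipV h) v * normV (ipV h) w" using cb by blast
  obtain Ce where Ce: "\<And>h x. h \<in> I \<Longrightarrow> norm (Ah1 h (P h x)) \<le> Ce / h\<^sup>2 * norm x \<and>
                     norm (Ah2 h (P h x)) \<le> Ce / h\<^sup>2 * norm x" using ce by blast
  obtain Cf where Cf: "\<And>h v. h \<in> I \<Longrightarrow> v \<in> D \<Longrightarrow> norm (P h (A1 v) - Ah1 h (P h v)) \<le> Cf * norm (A v) \<and>
                      norm (P h (A2 v) - Ah2 h (P h v)) \<le> Cf * norm (A v)" using cf by blast
  obtain Cg where Cg: "\<And>h x. h \<in> I \<Longrightarrow> norm (inv_op D A x - inv_op (V h) (Ah h) (P h x)) \<le> Cg * h\<^sup>2 * norm x"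
    using cg by blast
  obtain Cp where Cp: "\<And>h v. h \<in> I \<Longrightarrow> v \<in> D \<Longrightarrow> norm (v - P h v) \<le> Cp * h\<^sup>2 * norm (A v)"
    using Cp by blast
  have hpos: "h \<in> I \<Longrightarrow> h > 0" for h using I0 by auto
  obtain Bs where Bs: "\<And>h. h \<in> I \<Longrightarrow> finite (Bs h) \<and> V h = span (Bs h)"
    using Ph by metis
  have Ce': "norm (Ah1 h (P h x)) \<le> \<bar>Ce\<bar> / h\<^sup>2 * norm x \<and> norm (Ah2 h (P h x)) \<le> \<bar>Ce\<bar> / h\<^sup>2 * norm x"
    if h: "h \<in> I" for h x
  proof -
    have "Ce / h\<^sup>2 * norm x \<le> \<bar>Ce\<bar> / h\<^sup>2 * norm x"
      by (intro mult_right_mono divide_right_mono) auto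
    then show ?thesis using Ce[OF h, of x] by linarith
  qed
  have "gsys2 D D1 D2 A A1 A2 I V P ipV Ah Ah1 Ah2 ca cb \<bar>Ce\<bar> \<bar>Cf\<bar> \<bar>Cg\<bar> \<bar>Cp\<bar> Bs"
  proof (intro gsys2.intro gsys2_axioms.intro)
    show "gsys D D1 D2 A A1 A2 I V P ipV Ah Ah1 Ah2" by (rule gsys.intro[OF cA cP cAh])
    show "ca > 0" by (rule ca)
    show "\<bar>Ce\<bar> \<ge> 0" "\<bar>Cf\<bar> \<ge> 0" "\<bar>Cg\<bar> \<ge> 0" "\<bar>Cp\<bar> \<ge> 0" by simp_all
    show "h > 0" if "h \<in> I" for h using hpos that .
    show "norm (P h (A1 v) - Ah1 h (P h v)) \<le> \<bar>Cf\<bar> * norm (A v)" if "h \<in> I" "v \<in> D" for h v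
      by (rule le_abs_mult) (use Cf[OF that] in auto)
    show "norm (P h (A2 v) - Ah2 h (P h v)) \<le> \<bar>Cf\<bar> * norm (A v)" if "h \<in> I" "v \<in> D" for h v
      by (rule le_abs_mult) (use Cf[OF that] in auto)
    show "norm (inv_op D A x - inv_op (V h) (Ah h) (P h x)) \<le> \<bar>Cg\<bar> * h\<^sup>2 * norm x" if "h \<in> I" for h x
      using le_abs_mult[of _ Cg "h\<^sup>2 * norm x"] Cg[OF that, of x] by (simp add: mult.assoc)
    show "norm (v - P h v) \<le> \<bar>Cp\<bar> * h\<^sup>2 * norm (A v)" if "h \<in> I" "v \<in> D" for h v
      using le_abs_mult[of _ Cp "h\<^sup>2 * norm (A v)"] Cp[OF that] by (simp add: mult.assoc)
    show "dsys (V h) (P h) (Ah h) (Ah1 h) (Ah2 h) (ipV h) (Bs h) ca cb (\<bar>Ce\<bar> / h\<^sup>2)" if h: "h \<in> I" for h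
    proof (rule dsys.intro)
      show "bounded_linear (P h)" "\<And>x. P h x \<in> V h" "\<And>v. v \<in> V h \<Longrightarrow> P h v = v" using Ph[OF h] by auto
      show "V h = span (Bs h)" "finite (Bs h)" using Bs[OF h] by auto
      show "lin_on (V h) (Ah h)" "lin_on (V h) (Ah1 h)" "lin_on (V h) (Ah2 h)" "inner_on (V h) (ipV h)"
        using Ah0[OF h] by auto
      show "\<And>v. v \<in> V h \<Longrightarrow> Ah h v \<in> V h" "\<And>v. v \<in> V h \<Longrightarrow> Ah1 h v \<in> V h" "\<And>v. v \<in> V h \<Longrightarrow> Ah2 h v \<in> V h"
        using Ah0[OF h] by auto
      show "ca > 0" by (rule ca)
      show "\<And>v. v \<in> V h \<Longrightarrow> inner (Ah h v) v \<ge> ca * (normV (ipV h) v)\<^sup>2" using ca(2)[OF h] by blast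
      show "\<And>v w. v \<in> V h \<Longrightarrow> w \<in> V h \<Longrightarrow> \<bar>inner (Ah h v) w\<bar> \<le> cb * normV (ipV h) v * normV (ipV h) w"
        using cb[OF h] by blast
      show "\<And>v. v \<in> V h \<Longrightarrow> Ah h v = Ah1 h v + Ah2 h v" using cc[OF h] by blast
      show "\<And>v. v \<in> V h \<Longrightarrow> inner (Ah1 h v) v \<ge> 0" "\<And>v. v \<in> V h \<Longrightarrow> inner (Ah2 h v) v \<ge> 0"
        using cd[OF h] by auto
      show "\<bar>Ce\<bar> / h\<^sup>2 \<ge> 0" by simp
      show "\<And>x. norm (Ah1 h (P h x)) \<le> \<bar>Ce\<bar> / h\<^sup>2 * norm x" "\<And>x. norm (Ah2 h (P h x)) \<le> \<bar>Ce\<bar> / h\<^sup>2 * norm x"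
        using Ce'[OF h] by auto
    qed
  qed
  then show ?thesis by blast
qed

context gsys2 begin

lemma P_bound: "\<exists>Kp\<ge>0. \<forall>h\<in>I. \<forall>x. norm (P h x) \<le> Kp * norm x"
proof -
  obtain Cs where Cs0: "Cs \<ge> 0" and Cs: "\<And>t x. t > 0 \<Longrightarrow> x \<in> D \<Longrightarrow> t * norm x \<le> Cs * norm (A x + t *\<^sub>R x)"
    using res_bound by blast
  define Q where "Q = (cb/ca)\<^sup>2 * ((Cs + Cg*(1+Cs)) * (2*Ce*(1+Cs)))"
  have Q0: "Q \<ge> 0" unfolding Q_def using Cs0 Cg0 Ce0 by simp
  define Kp where "Kp = Cs + Cp*(1+Cs) + sqrt Q"
  have Kp0: "Kp \<ge> 0" unfolding Kp_def using Cs0 Cp0 Q0 by simp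
  have "norm (P h x) \<le> Kp * norm x" if h: "h \<in> I" for h x
  proof -
    interpret d: dsys "V h" "P h" "Ah h" "Ah1 h" "Ah2 h" "ipV h" "Bs h" ca cb "Ce / h\<^sup>2" by (rule ds[OF h])
    have h0: "h > 0" by (rule hpos[OF h])
    define t where "t = 1 / h\<^sup>2"
    have t0: "t > 0" using h0 by (simp add: t_def)
    have th: "h\<^sup>2 * t = 1" using h0 by (simp add: t_def)
    define xl where "xl = res_op D A t (t *\<^sub>R x)"
    have xlD: "xl \<in> D" and xle: "A xl + t *\<^sub>R xl = t *\<^sub>R x" using res_props[OF t0] xl_def by auto
    have "t * norm xl \<le> Cs * norm (t *\<^sub>R x)" using Cs[OF t0 xlD] xle by simp
    also have "\<dots> = t * (Cs * norm x)" using t0 by simp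
    finally have nxl: "norm xl \<le> Cs * norm x" using t0 by simp
    define xh where "xh = x - xl"
    have Axl: "A xl = t *\<^sub>R xh"
    proof -
      have "A xl = t *\<^sub>R x - t *\<^sub>R xl" using xle by (simp add: eq_diff_eq)
      then show ?thesis by (simp add: xh_def scaleR_diff_right)
    qed
    have nxh: "norm xh \<le> (1 + Cs) * norm x"
      using norm_triangle_ineq4[of x xl] nxl unfolding xh_def by (simp add: algebra_simps)
    have nPxl: "norm (P h xl) \<le> (Cs + Cp*(1+Cs)) * norm x"
    proof -
      have "norm (xl - P h xl) \<le> Cp * h\<^sup>2 * norm (A xl)" by (rule pp[OF h xlD])
      also have "\<dots> = Cp * (h\<^sup>2 * t) * norm xh" unfolding Axl using t0 by simp
      also have "\<dots> = Cp * norm xh" using th by simp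
      also have "\<dots> \<le> Cp * ((1 + Cs) * norm x)" using nxh Cp0 by (simp add: mult_left_mono)
      finally have a: "norm (xl - P h xl) \<le> Cp * ((1 + Cs) * norm x)" .
      have "norm (P h xl) \<le> norm xl + norm (xl - P h xl)"
        using norm_triangle_ineq4[of xl "xl - P h xl"] by simp
      then show ?thesis using a nxl by (simp add: algebra_simps)
    qed
    have inv_xh: "inv_op D A xh = h\<^sup>2 *\<^sub>R xl"
    proof (rule inv_eq)
      show "h\<^sup>2 *\<^sub>R xl \<in> D" using subD xlD subspace_scale by blast
      show "A (h\<^sup>2 *\<^sub>R xl) = xh" using lin_on_scale[OF linA xlD] Axl th by simp
    qed
    define v where "v = P h xh"
    have vV: "v \<in> V h" unfolding v_def by (rule d.P_in)
    have nAv: "norm (Ah h v) \<le> 2 * (Ce / h\<^sup>2) * norm xh" unfolding v_def by (rule d.A_P_bound)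
    define w where "w = inv_op (V h) (Ah h) v"
    have nw: "norm w \<le> h\<^sup>2 * ((Cs + Cg*(1+Cs)) * norm x)"
    proof -
      have "norm w \<le> norm (inv_op D A xh) + norm (inv_op D A xh - w)"
        using norm_triangle_ineq4[of "inv_op D A xh" "inv_op D A xh - w"] by simp
      also have "norm (inv_op D A xh - w) \<le> Cg * h\<^sup>2 * norm xh" unfolding w_def v_def by (rule gg[OF h])
      also have "norm (inv_op D A xh) = h\<^sup>2 * norm xl" unfolding inv_xh by simp
      finally have "norm w \<le> h\<^sup>2 * norm xl + Cg * h\<^sup>2 * norm xh" by simp
      also have "\<dots> \<le> h\<^sup>2 * (Cs * norm x) + Cg * h\<^sup>2 * ((1 + Cs) * norm x)"
        using nxl nxh Cg0 by (intro add_mono mult_left_mono) auto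
      finally show ?thesis by (simp add: algebra_simps)
    qed
    have "(norm v)\<^sup>2 \<le> (cb/ca)\<^sup>2 * (norm w * norm (Ah h v))" unfolding w_def by (rule d.interp[OF vV])
    also have "\<dots> \<le> (cb/ca)\<^sup>2 * ((h\<^sup>2 * ((Cs + Cg*(1+Cs)) * norm x)) * (2 * (Ce / h\<^sup>2) * ((1 + Cs) * norm x)))"
    proof (rule mult_left_mono)
      have "2 * (Ce / h\<^sup>2) * norm xh \<le> 2 * (Ce / h\<^sup>2) * ((1 + Cs) * norm x)"
        using nxh Ce0 by (intro mult_left_mono) auto
      then have "norm (Ah h v) \<le> 2 * (Ce / h\<^sup>2) * ((1 + Cs) * norm x)" using nAv by linarith
      then show "norm w * norm (Ah h v) \<le> (h\<^sup>2 * ((Cs + Cg*(1+Cs)) * norm x)) * (2 * (Ce / h\<^sup>2) * ((1 + Cs) * norm x))"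
        using nw Cs0 Cg0 by (intro mult_mono) auto
    qed simp
    also have "\<dots> = (cb/ca)\<^sup>2 * ((h\<^sup>2 * (Ce / h\<^sup>2)) * (2 * ((Cs + Cg*(1+Cs)) * norm x) * ((1 + Cs) * norm x)))"
      by (simp only: ac_simps)
    also have "h\<^sup>2 * (Ce / h\<^sup>2) = Ce" using h0 by simp
    also have "(cb/ca)\<^sup>2 * (Ce * (2 * ((Cs + Cg*(1+Cs)) * norm x) * ((1 + Cs) * norm x))) = Q * (norm x)\<^sup>2"
      unfolding Q_def by (simp add: power2_eq_square algebra_simps)
    also have "\<dots> = (sqrt Q * norm x)\<^sup>2" using Q0 by (simp add: power_mult_distrib)
    finally have nv: "norm v \<le> sqrt Q * norm x"
      by (rule power2_le_imp_le) (use Q0 in simp)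
    have "P h x = P h xl + v" unfolding v_def xh_def using d.P_add[of xl "x - xl"] by simp
    then have "norm (P h x) \<le> norm (P h xl) + norm v" by (simp add: norm_triangle_ineq)
    also have "\<dots> \<le> (Cs + Cp*(1+Cs)) * norm x + sqrt Q * norm x" using nPxl nv by linarith
    finally show ?thesis unfolding Kp_def by (simp add: algebra_simps)
  qed
  then show ?thesis using Kp0 by blast
qed


lemma K_gen:
  assumes M: "\<And>y. norm (Al (inv_op D A y)) \<le> M * norm y"
    and fl: "\<And>h v. h \<in> I \<Longrightarrow> v \<in> D \<Longrightarrow> norm (P h (Al v) - Ahl h (P h v)) \<le> Cf * norm (A v)"
    and el: "\<And>h x. h \<in> I \<Longrightarrow> norm (Ahl h (P h x)) \<le> Ce / h\<^sup>2 * norm x"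
    and linl: "\<And>h. h \<in> I \<Longrightarrow> lin_on (V h) (Ahl h)"
    and Kp0: "Kp \<ge> 0" and Kp: "\<And>h x. h \<in> I \<Longrightarrow> norm (P h x) \<le> Kp * norm x"
    and h: "h \<in> I" and u: "u \<in> V h"
  shows "norm (Ahl h u) \<le> (Ce * Cg + Kp * \<bar>M\<bar> + Cf) * norm (Ah h u)"
proof -
  interpret d: dsys "V h" "P h" "Ah h" "Ah1 h" "Ah2 h" "ipV h" "Bs h" ca cb "Ce / h\<^sup>2" by (rule ds[OF h])
  have h0: "h > 0" by (rule hpos[OF h])
  define y where "y = Ah h u"
  have yV: "y \<in> V h" unfolding y_def by (rule d.AV[OF u])
  have Py: "P h y = y" by (rule d.P_id[OF yV])
  have uinv0: "inv_op (V h) (Ah h) y = u" unfolding y_def by (rule d.Ainv_eq[OF u])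
  have uinv: "inv_op (V h) (Ah h) (P h y) = u" using uinv0 Py by simp
  define a where "a = inv_op D A y"
  have aD: "a \<in> D" and Aa: "A a = y" using inv_props a_def by auto
  have Pu: "P h u = u" by (rule d.P_id[OF u])
  have "u = P h a + P h (u - a)" using d.P_add[of a "u - a"] Pu by simp
  then have split: "Ahl h u = Ahl h (P h a) + Ahl h (P h (u - a))"
    using lin_on_add[OF linl[OF h] d.P_in d.P_in] by metis
  have n1: "norm (Ahl h (P h (u - a))) \<le> Ce * Cg * norm y"
  proof -
    have "norm (Ahl h (P h (u - a))) \<le> Ce / h\<^sup>2 * norm (u - a)" by (rule el[OF h])
    also have "norm (u - a) \<le> Cg * h\<^sup>2 * norm y"
      using gg[OF h, of y] uinv unfolding a_def by (simp add: norm_minus_commute)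
    then have "Ce / h\<^sup>2 * norm (u - a) \<le> Ce / h\<^sup>2 * (Cg * h\<^sup>2 * norm y)"
      using Ce0 h0 by (intro mult_left_mono) auto
    also have "\<dots> = Ce * Cg * norm y" using h0 by (simp add: field_simps)
    finally show ?thesis .
  qed
  have n2: "norm (Ahl h (P h a)) \<le> (Kp * \<bar>M\<bar> + Cf) * norm y"
  proof -
    have "norm (Ahl h (P h a)) \<le> norm (P h (Al a)) + norm (P h (Al a) - Ahl h (P h a))"
      using norm_triangle_ineq4[of "P h (Al a)" "P h (Al a) - Ahl h (P h a)"] by simp
    also have "norm (P h (Al a) - Ahl h (P h a)) \<le> Cf * norm y" using fl[OF h aD] Aa by simp
    also have "norm (P h (Al a)) \<le> Kp * norm (Al a)" by (rule Kp[OF h])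
    also have "\<dots> \<le> Kp * (\<bar>M\<bar> * norm y)"
    proof -
      have "norm (Al a) \<le> M * norm y" using M[of y] a_def by simp
      also have "\<dots> \<le> \<bar>M\<bar> * norm y" by (rule mult_right_mono) simp_all
      finally show ?thesis using Kp0 by (simp add: mult_left_mono)
    qed
    finally show ?thesis by (simp add: algebra_simps)
  qed
  have "norm (Ahl h u) \<le> norm (Ahl h (P h a)) + norm (Ahl h (P h (u - a)))"
    unfolding split by (rule norm_triangle_ineq)
  also have "\<dots> \<le> (Kp * \<bar>M\<bar> + Cf) * norm y + Ce * Cg * norm y" using n1 n2 by linarith
  finally show ?thesis unfolding y_def by (simp add: algebra_simps)
qed

lemma K_bounds:
  "\<exists>Kp\<ge>0. \<exists>K1\<ge>0. \<exists>K2\<ge>0. (\<forall>h\<in>I. \<forall>x. norm (P h x) \<le> Kp * norm x) \<and>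
     (\<forall>h\<in>I. \<forall>u\<in>V h. norm (Ah1 h u) \<le> K1 * norm (Ah h u) \<and> norm (Ah2 h u) \<le> K2 * norm (Ah h u))"
proof -
  obtain Kp where Kp0: "Kp \<ge> 0" and Kp: "\<And>h x. h \<in> I \<Longrightarrow> norm (P h x) \<le> Kp * norm x"
    using P_bound by blast
  obtain M1 where M1: "\<And>y. norm (A1 (inv_op D A y)) \<le> M1 * norm y" using cA unfolding condA_def by blast
  obtain M2 where M2: "\<And>y. norm (A2 (inv_op D A y)) \<le> M2 * norm y" using cA unfolding condA_def by blast
  have e1: "norm (Ah1 h (P h x)) \<le> Ce / h\<^sup>2 * norm x" and e2: "norm (Ah2 h (P h x)) \<le> Ce / h\<^sup>2 * norm x"
    if h: "h \<in> I" for h x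
  proof -
    interpret d: dsys "V h" "P h" "Ah h" "Ah1 h" "Ah2 h" "ipV h" "Bs h" ca cb "Ce / h\<^sup>2" by (rule ds[OF h])
    show "norm (Ah1 h (P h x)) \<le> Ce / h\<^sup>2 * norm x" by (rule d.e1)
    show "norm (Ah2 h (P h x)) \<le> Ce / h\<^sup>2 * norm x" by (rule d.e2)
  qed
  have l1: "lin_on (V h) (Ah1 h)" and l2: "lin_on (V h) (Ah2 h)" if h: "h \<in> I" for h
  proof -
    interpret d: dsys "V h" "P h" "Ah h" "Ah1 h" "Ah2 h" "ipV h" "Bs h" ca cb "Ce / h\<^sup>2" by (rule ds[OF h])
    show "lin_on (V h) (Ah1 h)" by (rule d.linA1)
    show "lin_on (V h) (Ah2 h)" by (rule d.linA2)
  qed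
  have k1: "\<And>h u. h \<in> I \<Longrightarrow> u \<in> V h \<Longrightarrow> norm (Ah1 h u) \<le> (Ce * Cg + Kp * \<bar>M1\<bar> + Cf) * norm (Ah h u)"
    by (rule K_gen[OF M1 f1 e1 l1 Kp0 Kp])
  have k2: "\<And>h u. h \<in> I \<Longrightarrow> u \<in> V h \<Longrightarrow> norm (Ah2 h u) \<le> (Ce * Cg + Kp * \<bar>M2\<bar> + Cf) * norm (Ah h u)"
    by (rule K_gen[OF M2 f2 e2 l2 Kp0 Kp])
  have p1: "Ce * Cg + Kp * \<bar>M1\<bar> + Cf \<ge> 0" using Ce0 Cg0 Kp0 Cf0 by simp
  have p2: "Ce * Cg + Kp * \<bar>M2\<bar> + Cf \<ge> 0" using Ce0 Cg0 Kp0 Cf0 by simp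
  show ?thesis using Kp0 Kp k1 k2 p1 p2 by blast
qed

end

definition Sx :: "'a set \<Rightarrow> ('a::real_normed_vector \<Rightarrow> 'a) \<Rightarrow> ('a \<Rightarrow> 'a) \<Rightarrow> ('a \<Rightarrow> 'a) \<Rightarrow> real \<Rightarrow> 'a \<Rightarrow> 'a" where
  "Sx Vh Ahh Ah1h Ah2h \<tau> v = (let w = semigroup_op Ahh \<tau> v - shift_inv Vh Ah2h \<tau> (shift_inv Vh Ah1h \<tau> v) in w + \<tau> *\<^sub>R Ah2h w)"

lemma (in dsys) Sx_eq: "v \<in> V \<Longrightarrow> \<tau> \<ge> 0 \<Longrightarrow> Sx V A A1 A2 \<tau> v = Sop \<tau> v"
  unfolding Sx_def by (rule expr_eq)

context gsys2 begin

lemma main_bounds: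
  "\<exists>C0\<ge>0. \<exists>C1\<ge>0. \<forall>h\<in>I. \<forall>\<tau>>0.
     (\<forall>y. norm (Sx (V h) (Ah h) (Ah1 h) (Ah2 h) \<tau> (P h y)) \<le> C0 * norm y) \<and>
     (\<forall>y. norm (Sx (V h) (Ah h) (Ah1 h) (Ah2 h) \<tau> (P h (inv_op D A y))) \<le> C1 * \<tau> * norm y) \<and>
     (\<forall>y z. Sx (V h) (Ah h) (Ah1 h) (Ah2 h) \<tau> (P h (y + z)) = Sx (V h) (Ah h) (Ah1 h) (Ah2 h) \<tau> (P h y) + Sx (V h) (Ah h) (Ah1 h) (Ah2 h) \<tau> (P h z)) \<and>
     (\<forall>c y. Sx (V h) (Ah h) (Ah1 h) (Ah2 h) \<tau> (P h (c *\<^sub>R y)) = c *\<^sub>R Sx (V h) (Ah h) (Ah1 h) (Ah2 h) \<tau> (P h y))"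
proof -
  obtain Kp K1 K2 where Kp0: "Kp \<ge> 0" and K10: "K1 \<ge> 0" and K20: "K2 \<ge> 0"
    and Kp: "\<And>h x. h \<in> I \<Longrightarrow> norm (P h x) \<le> Kp * norm x"
    and K1: "\<And>h u. h \<in> I \<Longrightarrow> u \<in> V h \<Longrightarrow> norm (Ah1 h u) \<le> K1 * norm (Ah h u)"
    and K2: "\<And>h u. h \<in> I \<Longrightarrow> u \<in> V h \<Longrightarrow> norm (Ah2 h u) \<le> K2 * norm (Ah h u)"
    using K_bounds by blast
  define kq where "kq = cb\<^sup>2 / (2 * ca\<^sup>2)"
  define C0 where "C0 = (2 + K2 * sqrt kq) * Kp"
  define C1 where "C1 = (1 + K2 + K1) * Kp + 4 * Ce * (Cp + Cg)"
  have kq0: "kq \<ge> 0" unfolding kq_def by simp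
  have C00: "C0 \<ge> 0" unfolding C0_def using K20 Kp0 kq0 by simp
  have C10: "C1 \<ge> 0" unfolding C1_def using K10 K20 Kp0 Ce0 Cp0 Cg0 by simp
  have all: "(\<forall>y. norm (Sx (V h) (Ah h) (Ah1 h) (Ah2 h) \<tau> (P h y)) \<le> C0 * norm y) \<and>
     (\<forall>y. norm (Sx (V h) (Ah h) (Ah1 h) (Ah2 h) \<tau> (P h (inv_op D A y))) \<le> C1 * \<tau> * norm y) \<and>
     (\<forall>y z. Sx (V h) (Ah h) (Ah1 h) (Ah2 h) \<tau> (P h (y + z)) = Sx (V h) (Ah h) (Ah1 h) (Ah2 h) \<tau> (P h y) + Sx (V h) (Ah h) (Ah1 h) (Ah2 h) \<tau> (P h z)) \<and>
     (\<forall>c y. Sx (V h) (Ah h) (Ah1 h) (Ah2 h) \<tau> (P h (c *\<^sub>R y)) = c *\<^sub>R Sx (V h) (Ah h) (Ah1 h) (Ah2 h) \<tau> (P h y))"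
    if h: "h \<in> I" and tau: "\<tau> > 0" for h \<tau>
  proof -
    interpret d: dsys "V h" "P h" "Ah h" "Ah1 h" "Ah2 h" "ipV h" "Bs h" ca cb "Ce / h\<^sup>2" by (rule ds[OF h])
    have h0: "h > 0" by (rule hpos[OF h])
    have tau0: "\<tau> \<ge> 0" using tau by simp
    have kqe: "d.Kq = kq" unfolding d.Kq_def kq_def ..
    have SxP: "Sx (V h) (Ah h) (Ah1 h) (Ah2 h) \<tau> (P h y) = d.Sop \<tau> (P h y)" for y
      by (rule d.Sx_eq[OF d.P_in tau0])
    have b0: "norm (Sx (V h) (Ah h) (Ah1 h) (Ah2 h) \<tau> (P h y)) \<le> C0 * norm y" for y
    proof -
      have "norm (d.Sop \<tau> (P h y)) \<le> (2 + K2 * sqrt kq) * norm (P h y)"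
        using d.Sop_b0[OF d.P_in tau0 K2[OF h] K20] kqe by simp
      also have "\<dots> \<le> (2 + K2 * sqrt kq) * (Kp * norm y)"
        using Kp[OF h, of y] K20 kq0 by (intro mult_left_mono) auto
      finally show ?thesis unfolding SxP C0_def by (simp add: ac_simps)
    qed
    have b1: "norm (Sx (V h) (Ah h) (Ah1 h) (Ah2 h) \<tau> (P h (inv_op D A y))) \<le> C1 * \<tau> * norm y" for y
    proof -
      define a where "a = inv_op D A y"
      have aD: "a \<in> D" and Aa: "A a = y" using inv_props a_def by auto
      define v0 where "v0 = inv_op (V h) (Ah h) (P h y)"
      have v0V: "v0 \<in> V h" and Av0: "Ah h v0 = P h y" using d.Ainv[OF d.P_in] v0_def by auto
      have nd: "norm (P h a - v0) \<le> (Cp + Cg) * h\<^sup>2 * norm y"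
      proof -
        have "norm (P h a - v0) \<le> norm (P h a - a) + norm (a - v0)"
          by (rule norm_diff_triangle_ineq[of "P h a" a a v0, simplified])
        also have "norm (P h a - a) \<le> Cp * h\<^sup>2 * norm y" using pp[OF h aD] Aa by (simp add: norm_minus_commute)
        also have "norm (a - v0) \<le> Cg * h\<^sup>2 * norm y" using gg[OF h, of y] unfolding a_def v0_def .
        finally show ?thesis by (simp add: algebra_simps)
      qed
      have split: "d.Sop \<tau> (P h a) = d.Sop \<tau> v0 + d.Sop \<tau> (P h a - v0)"
        using d.Sop_diff[OF d.P_in v0V tau0] by simp
      have s1: "norm (d.Sop \<tau> v0) \<le> \<tau> * (1 + K2 + K1) * (Kp * norm y)"
      proof -
        have "norm (d.Sop \<tau> v0) \<le> \<tau> * (1 + K2 + K1) * norm (Ah h v0)"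
          by (rule d.Sop_b1[OF v0V tau0 K1[OF h] K2[OF h]])
        also have "\<dots> \<le> \<tau> * (1 + K2 + K1) * (Kp * norm y)"
          using Av0 Kp[OF h, of y] tau0 K10 K20 by (intro mult_left_mono) auto
        finally show ?thesis .
      qed
      have s2: "norm (d.Sop \<tau> (P h a - v0)) \<le> \<tau> * (4 * Ce * (Cp + Cg)) * norm y"
      proof -
        have "norm (d.Sop \<tau> (P h a - v0)) \<le> 4 * \<tau> * (Ce / h\<^sup>2) * norm (P h a - v0)"
          by (rule d.Sop_b2[OF d.Vdiff[OF d.P_in v0V] tau0])
        also have "\<dots> \<le> 4 * \<tau> * (Ce / h\<^sup>2) * ((Cp + Cg) * h\<^sup>2 * norm y)"
          using nd tau0 Ce0 by (intro mult_left_mono) auto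
        also have "\<dots> = \<tau> * (4 * Ce * (Cp + Cg)) * norm y" using h0 by (simp add: field_simps)
        finally show ?thesis .
      qed
      have "norm (d.Sop \<tau> (P h a)) \<le> norm (d.Sop \<tau> v0) + norm (d.Sop \<tau> (P h a - v0))"
        unfolding split by (rule norm_triangle_ineq)
      also have "\<dots> \<le> \<tau> * (1 + K2 + K1) * (Kp * norm y) + \<tau> * (4 * Ce * (Cp + Cg)) * norm y"
        using s1 s2 by linarith
      also have "\<dots> = C1 * \<tau> * norm y" unfolding C1_def by (simp add: algebra_simps)
      finally show ?thesis unfolding SxP a_def .
    qed
    have l1: "Sx (V h) (Ah h) (Ah1 h) (Ah2 h) \<tau> (P h (y + z)) = Sx (V h) (Ah h) (Ah1 h) (Ah2 h) \<tau> (P h y) + Sx (V h) (Ah h) (Ah1 h) (Ah2 h) \<tau> (P h z)" for y z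
    proof -
      have "Sx (V h) (Ah h) (Ah1 h) (Ah2 h) \<tau> (P h (y + z)) = d.Sop \<tau> (P h (y + z))" by (rule SxP)
      also have "\<dots> = d.Sop \<tau> (P h y + P h z)" by (simp only: d.P_add)
      also have "\<dots> = d.Sop \<tau> (P h y) + d.Sop \<tau> (P h z)" by (rule d.Sop_add[OF d.P_in d.P_in tau0])
      finally show ?thesis by (simp only: SxP)
    qed
    have l2: "Sx (V h) (Ah h) (Ah1 h) (Ah2 h) \<tau> (P h (c *\<^sub>R y)) = c *\<^sub>R Sx (V h) (Ah h) (Ah1 h) (Ah2 h) \<tau> (P h y)" for c y
    proof -
      have "Sx (V h) (Ah h) (Ah1 h) (Ah2 h) \<tau> (P h (c *\<^sub>R y)) = d.Sop \<tau> (P h (c *\<^sub>R y))" by (rule SxP)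
      also have "\<dots> = d.Sop \<tau> (c *\<^sub>R P h y)" by (simp only: d.P_scale)
      also have "\<dots> = c *\<^sub>R d.Sop \<tau> (P h y)" by (rule d.Sop_scale[OF d.P_in tau0])
      finally show ?thesis by (simp only: SxP)
    qed
    show ?thesis by (intro conjI allI b0 b1 l1 l2)
  qed
  have X: "\<forall>h\<in>I. \<forall>\<tau>>0. (\<forall>y. norm (Sx (V h) (Ah h) (Ah1 h) (Ah2 h) \<tau> (P h y)) \<le> C0 * norm y) \<and>
     (\<forall>y. norm (Sx (V h) (Ah h) (Ah1 h) (Ah2 h) \<tau> (P h (inv_op D A y))) \<le> C1 * \<tau> * norm y) \<and>
     (\<forall>y z. Sx (V h) (Ah h) (Ah1 h) (Ah2 h) \<tau> (P h (y + z)) = Sx (V h) (Ah h) (Ah1 h) (Ah2 h) \<tau> (P h y) + Sx (V h) (Ah h) (Ah1 h) (Ah2 h) \<tau> (P h z)) \<and>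
     (\<forall>c y. Sx (V h) (Ah h) (Ah1 h) (Ah2 h) \<tau> (P h (c *\<^sub>R y)) = c *\<^sub>R Sx (V h) (Ah h) (Ah1 h) (Ah2 h) \<tau> (P h y))"
    by (intro ballI allI impI) (rule all; assumption)
  show ?thesis by (rule exI[of _ C0], rule conjI[OF C00], rule exI[of _ C1], rule conjI[OF C10], rule X)
qed

end

lemma g_integral:
  fixes a B1 B2 z :: real
  assumes z: "0 < z" "z < 1" and a: "a > 0"
  shows "((\<lambda>t. if t \<le> a then t powr (-z) * B1 else t powr (-z-1) * B2) has_integral
           (a powr (1-z) / (1-z) * B1 + a powr (-z) / z * B2)) {0<..}"
proof -
  define g where "g t = (if t \<le> a then t powr (-z) * B1 else t powr (-z-1) * B2)" for t
  have i1: "((\<lambda>t. t powr (-z) * B1) has_integral (a powr (-z+1) / (-z+1) * B1)) {0..a}"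
    by (rule has_integral_mult_left[OF has_integral_powr_from_0]) (use z a in auto)
  have e1: "-z+1 = 1-z" by simp
  have i1': "(g has_integral (a powr (1-z) / (1-z) * B1)) {0..a}"
    unfolding e1[symmetric] by (rule has_integral_spike[OF negligible_empty _ i1]) (auto simp: g_def)
  have i2: "((\<lambda>t. t powr (-z-1) * B2) has_integral (- (a powr (-z-1+1)) / (-z-1+1) * B2)) {a..}"
    by (rule has_integral_mult_left[OF has_integral_powr_to_inf]) (use z a in auto)
  have e2: "- (a powr (-z-1+1)) / (-z-1+1) * B2 = a powr (-z) / z * B2" by simp
  have i2': "(g has_integral (a powr (-z) / z * B2)) {a..}"
    unfolding e2[symmetric]
  proof (rule has_integral_spike[OF negligible_sing _ i2])
    fix t assume "t \<in> {a..} - {a}"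
    then show "g t = t powr (-z-1) * B2" by (auto simp: g_def)
  qed
  have "(g has_integral (a powr (1-z) / (1-z) * B1 + a powr (-z) / z * B2)) ({0..a} \<union> {a..})"
  proof (rule has_integral_Un[OF i1' i2'])
    have "{0..a} \<inter> {a..} = {a}" using a by auto
    then show "negligible ({0..a} \<inter> {a..})" by simp
  qed
  moreover have "{0..a} \<union> {a..} = {0::real..}" using a by auto
  ultimately have i0: "(g has_integral (a powr (1-z) / (1-z) * B1 + a powr (-z) / z * B2)) {0..}" by simp
  have "(g has_integral (a powr (1-z) / (1-z) * B1 + a powr (-z) / z * B2)) {0<..}"
  proof (subst has_integral_spike_set_eq)
    have em: "{x \<in> {0<..} - {0..}. g x \<noteq> 0} = {}" by auto
    show "negligible {x \<in> {0<..} - {0..}. g x \<noteq> 0}" unfolding em by (rule negligible_empty)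
    show "negligible {x \<in> {0..} - {0<..}. g x \<noteq> 0}"
      by (rule negligible_subset[OF negligible_sing[of 0]]) auto
  qed (rule i0)
  then show ?thesis unfolding g_def .
qed


lemma (in gsys) interp_bound:
  fixes T :: "'a \<Rightarrow> 'a"
  assumes Tadd: "\<And>y z. T (y + z) = T y + T z" and Tscale: "\<And>c y. T (c *\<^sub>R y) = c *\<^sub>R T y"
    and T0: "\<And>y. norm (T y) \<le> C0 * norm y" and T1: "\<And>y. norm (T (inv_op D A y)) \<le> C1 * \<tau> * norm y"
    and C00: "C0 \<ge> 0" and C10: "C1 \<ge> 0" and Cs0: "Cs \<ge> 0"
    and Cs: "\<And>t x. t > 0 \<Longrightarrow> x \<in> D \<Longrightarrow> t * norm x \<le> Cs * norm (A x + t *\<^sub>R x)"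
    and tau: "\<tau> > 0" and z: "0 < z" "z < 1"
  shows "norm (T (neg_frac_pow D A z x)) \<le> (C1 * (1 + Cs) / (1 - z) + C0 * Cs / z) * \<tau> powr z * norm x"
proof -
  have blT: "bounded_linear T"
    by (rule bounded_linear_intro[where K=C0]) (auto simp: Tadd Tscale T0 mult.commute)
  have T00: "T 0 = 0" using Tscale[of 0 0] by simp
  define f where "f t = t powr (-z) *\<^sub>R res_op D A t x" for t
  define c where "c = sin (pi * z) / pi"
  have nfp: "neg_frac_pow D A z x = c *\<^sub>R integral {0<..} f"
    unfolding neg_frac_pow_def c_def f_def using z by simp
  have c1: "\<bar>c\<bar> \<le> 1"
  proof -
    have "\<bar>sin (pi * z)\<bar> \<le> pi" using abs_sin_le_one[of "pi * z"] pi_gt3 by linarith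
    then show ?thesis unfolding c_def by (simp add: abs_divide divide_le_eq_1)
  qed
  define a where "a = 1 / \<tau>"
  have a0: "a > 0" using tau by (simp add: a_def)
  define B1 where "B1 = C1 * \<tau> * ((1 + Cs) * norm x)"
  define B2 where "B2 = C0 * (Cs * norm x)"
  have B10: "B1 \<ge> 0" unfolding B1_def using C10 tau Cs0 by simp
  have B20: "B2 \<ge> 0" unfolding B2_def using C00 Cs0 by simp
  define g where "g t = (if t \<le> a then t powr (-z) * B1 else t powr (-z-1) * B2)" for t
  define Ig where "Ig = a powr (1-z) / (1-z) * B1 + a powr (-z) / z * B2"
  have gi: "(g has_integral Ig) {0<..}" unfolding g_def Ig_def by (rule g_integral[OF z a0])
  have Ig0: "Ig \<ge> 0" unfolding Ig_def using z B10 B20 by simp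
  have fb: "norm (T (f t)) \<le> g t" if t: "t > 0" for t
  proof -
    define r where "r = res_op D A t x"
    have rD: "r \<in> D" and re: "A r + t *\<^sub>R r = x" using res_props[OF t] r_def by auto
    have nr: "t * norm r \<le> Cs * norm x" using Cs[OF t rD] re by simp
    have Tr1: "norm (T r) \<le> B1"
    proof -
      have "r = inv_op D A (A r)" using inv_eq[OF rD refl] by simp
      then have "norm (T r) \<le> C1 * \<tau> * norm (A r)" using T1[of "A r"] by simp
      also have "norm (A r) \<le> (1 + Cs) * norm x"
      proof -
        have "A r = x - t *\<^sub>R r" using re by (simp add: eq_diff_eq)
        then have "norm (A r) \<le> norm x + t * norm r" using norm_triangle_ineq4[of x "t *\<^sub>R r"] t by simp
        then show ?thesis using nr by (simp add: algebra_simps)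
      qed
      then have "C1 * \<tau> * norm (A r) \<le> C1 * \<tau> * ((1 + Cs) * norm x)" using C10 tau by (intro mult_left_mono) auto
      finally show ?thesis unfolding B1_def .
    qed
    have Tr2: "t * norm (T r) \<le> B2"
    proof -
      have "t * norm (T r) \<le> t * (C0 * norm r)" using T0[of r] t by (simp add: mult_left_mono)
      also have "\<dots> = C0 * (t * norm r)" by simp
      also have "\<dots> \<le> C0 * (Cs * norm x)" using nr C00 by (simp add: mult_left_mono)
      finally show ?thesis unfolding B2_def .
    qed
    have nTf: "norm (T (f t)) = t powr (-z) * norm (T r)" unfolding f_def r_def[symmetric] Tscale by simp
    show ?thesis
    proof (cases "t \<le> a")
      case True
      then show ?thesis unfolding g_def nTf using Tr1 by (simp add: mult_left_mono)
    next
      case False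
      have "t powr (-z-1) = t powr (-z) / t" using t by (simp add: powr_diff)
      then have gt: "g t = t powr (-z) * (B2 / t)" using False unfolding g_def by simp
      have "norm (T r) \<le> B2 / t" using Tr2 t by (simp add: pos_le_divide_eq mult.commute)
      then have "t powr (-z) * norm (T r) \<le> t powr (-z) * (B2 / t)" by (rule mult_left_mono) simp
      then show ?thesis unfolding gt nTf .
    qed
  qed
  have main: "norm (T (integral {0<..} f)) \<le> Ig"
  proof (cases "f integrable_on {0<..}")
    case False
    then show ?thesis using Ig0 T00 by (simp add: not_integrable_integral)
  next
    case True
    define w where "w = T (integral {0<..} f)"
    have Tf: "(T \<circ> f) integrable_on {0<..}" by (rule integrable_linear[OF True blT])
    have w_eq: "w = integral {0<..} (T \<circ> f)" unfolding w_def by (rule integral_linear[OF True blT, symmetric])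
    have il: "(\<lambda>u. inner u w) \<circ> (T \<circ> f) integrable_on {0<..}"
      by (rule integrable_linear[OF Tf bounded_linear_inner_left])
    have "inner w w = integral {0<..} ((\<lambda>u. inner u w) \<circ> (T \<circ> f))"
      unfolding w_eq[symmetric] using integral_linear[OF Tf bounded_linear_inner_left, of w] w_eq by simp
    also have "\<dots> \<le> integral {0<..} (\<lambda>t. g t * norm w)"
    proof (rule integral_le[OF il])
      show "(\<lambda>t. g t * norm w) integrable_on {0<..}"
        using has_integral_mult_left[OF gi, of "norm w"] by blast
      fix t :: real assume "t \<in> {0<..}"
      then have t: "t > 0" by simp
      have "inner (T (f t)) w \<le> norm (T (f t)) * norm w" by (rule norm_cauchy_schwarz)
      also have "\<dots> \<le> g t * norm w" using fb[OF t] by (simp add: mult_right_mono)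
      finally show "((\<lambda>u. inner u w) \<circ> (T \<circ> f)) t \<le> g t * norm w" by simp
    qed
    also have "\<dots> = Ig * norm w" using integral_unique[OF has_integral_mult_left[OF gi, of "norm w"]] .
    finally have "(norm w)\<^sup>2 \<le> Ig * norm w" by (simp add: power2_norm_eq_inner)
    then have "norm w \<le> Ig" by (cases "norm w = 0") (use Ig0 in \<open>simp_all add: power2_eq_square\<close>)
    then show ?thesis unfolding w_def .
  qed
  have "norm (T (neg_frac_pow D A z x)) = \<bar>c\<bar> * norm (T (integral {0<..} f))"
    unfolding nfp Tscale by simp
  also have "\<dots> \<le> 1 * Ig" using c1 main Ig0 by (intro mult_mono) auto
  also have "\<dots> = (C1 * (1 + Cs) / (1 - z) + C0 * Cs / z) * \<tau> powr z * norm x"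
  proof -
    have p1: "a powr (1 - z) * \<tau> = \<tau> powr z"
    proof -
      have apow: "a powr (1 - z) = 1 / \<tau> powr (1 - z)" unfolding a_def using tau by (simp add: powr_divide)
      have q: "\<tau> powr z * \<tau> powr (1 - z) = \<tau>" using tau by (simp add: powr_add[symmetric])
      have ne: "\<tau> powr (1 - z) \<noteq> 0" using tau by simp
      have "a powr (1 - z) * \<tau> = (\<tau> powr z * \<tau> powr (1 - z)) / \<tau> powr (1 - z)" unfolding apow q by simp
      also have "\<dots> = \<tau> powr z" using ne by simp
      finally show ?thesis .
    qed
    have p2: "a powr (- z) = \<tau> powr z"
    proof -
      have "a powr (- z) = 1 powr (- z) / \<tau> powr (- z)" unfolding a_def by (rule powr_divide)
      also have "\<dots> = 1 / \<tau> powr (- z)" by simp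
      also have "\<dots> = \<tau> powr z" by (simp add: powr_minus divide_inverse)
      finally show ?thesis .
    qed
    have "Ig = (a powr (1-z) * \<tau>) * (C1 * ((1 + Cs) * norm x)) / (1-z) + a powr (-z) * (C0 * (Cs * norm x)) / z"
      unfolding Ig_def B1_def B2_def by (simp add: algebra_simps add_divide_distrib)
    also have "\<dots> = (C1 * (1 + Cs) / (1 - z) + C0 * Cs / z) * \<tau> powr z * norm x"
      unfolding p1 p2 by (simp add: algebra_simps add_divide_distrib)
    finally show ?thesis by simp
  qed
  finally show ?thesis .
qed

theorem lemma4p3:
  fixes D D1 D2 :: "'a::{real_inner, complete_space} set"
    and A A1 A2 :: "'a \<Rightarrow> 'a"
    and I :: "real set"
    and V :: "real \<Rightarrow> 'a set"
    and P :: "real \<Rightarrow> 'a \<Rightarrow> 'a"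
    and ipV :: "real \<Rightarrow> 'a \<Rightarrow> 'a \<Rightarrow> real"
    and Ah Ah1 Ah2 :: "real \<Rightarrow> 'a \<Rightarrow> 'a"
  assumes "condA D A D1 A1 D2 A2"
    and "condP I V P D A"
    and "condAh I V P ipV Ah Ah1 Ah2 D A A1 A2"
  shows "\<forall>\<zeta>\<in>{0..1}. \<exists>C. \<forall>h\<in>I. \<forall>\<tau>>0. \<forall>x.
           (let v = P h (neg_frac_pow D A \<zeta> x);
                w = semigroup_op (Ah h) \<tau> v
                    - shift_inv (V h) (Ah2 h) \<tau> (shift_inv (V h) (Ah1 h) \<tau> v)
            in norm (w + \<tau> *\<^sub>R Ah2 h w)) \<le> C * \<tau> powr \<zeta> * norm x"
proof -
  interpret g: gsys D D1 D2 A A1 A2 I V P ipV Ah Ah1 Ah2 using assms by (rule gsys.intro)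
  obtain ca cb Ce Cf Cg Cp Bs where g2: "gsys2 D D1 D2 A A1 A2 I V P ipV Ah Ah1 Ah2 ca cb Ce Cf Cg Cp Bs"
    using g.exists_gsys2 by blast
  interpret g2: gsys2 D D1 D2 A A1 A2 I V P ipV Ah Ah1 Ah2 ca cb Ce Cf Cg Cp Bs by (rule g2)
  obtain C0 C1 where C00: "C0 \<ge> 0" and C10: "C1 \<ge> 0" and MB: "\<forall>h\<in>I. \<forall>\<tau>>0.
     (\<forall>y. norm (Sx (V h) (Ah h) (Ah1 h) (Ah2 h) \<tau> (P h y)) \<le> C0 * norm y) \<and>
     (\<forall>y. norm (Sx (V h) (Ah h) (Ah1 h) (Ah2 h) \<tau> (P h (inv_op D A y))) \<le> C1 * \<tau> * norm y) \<and>
     (\<forall>y z. Sx (V h) (Ah h) (Ah1 h) (Ah2 h) \<tau> (P h (y + z)) = Sx (V h) (Ah h) (Ah1 h) (Ah2 h) \<tau> (P h y) + Sx (V h) (Ah h) (Ah1 h) (Ah2 h) \<tau> (P h z)) \<and>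
     (\<forall>c y. Sx (V h) (Ah h) (Ah1 h) (Ah2 h) \<tau> (P h (c *\<^sub>R y)) = c *\<^sub>R Sx (V h) (Ah h) (Ah1 h) (Ah2 h) \<tau> (P h y))"
    using g2.main_bounds by (elim exE conjE) blast
  obtain Cs where Cs0: "Cs \<ge> 0" and Cs: "\<And>t x. t > 0 \<Longrightarrow> x \<in> D \<Longrightarrow> t * norm x \<le> Cs * norm (A x + t *\<^sub>R x)"
    using g.res_bound by blast
  show ?thesis
  proof (intro ballI)
    fix z :: real assume z: "z \<in> {0..1}"
    define K where "K = (if z = 0 then C0 else if z = 1 then C1 else C1 * (1 + Cs) / (1 - z) + C0 * Cs / z)"
    show "\<exists>C. \<forall>h\<in>I. \<forall>\<tau>>0. \<forall>x.
           (let v = P h (neg_frac_pow D A z x);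
                w = semigroup_op (Ah h) \<tau> v
                    - shift_inv (V h) (Ah2 h) \<tau> (shift_inv (V h) (Ah1 h) \<tau> v)
            in norm (w + \<tau> *\<^sub>R Ah2 h w)) \<le> C * \<tau> powr z * norm x"
    proof (intro exI[of _ K] ballI allI impI)
      fix h \<tau> :: real and x :: 'a
      assume h: "h \<in> I" and tau: "\<tau> > 0"
      define T where "T y = Sx (V h) (Ah h) (Ah1 h) (Ah2 h) \<tau> (P h y)" for y
      have M: "(\<forall>y. norm (T y) \<le> C0 * norm y) \<and> (\<forall>y. norm (T (inv_op D A y)) \<le> C1 * \<tau> * norm y) \<and>
         (\<forall>y z. T (y + z) = T y + T z) \<and> (\<forall>c y. T (c *\<^sub>R y) = c *\<^sub>R T y)"
        unfolding T_def using MB h tau by blast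
      have eqlet: "(let v = P h (neg_frac_pow D A z x);
                w = semigroup_op (Ah h) \<tau> v
                    - shift_inv (V h) (Ah2 h) \<tau> (shift_inv (V h) (Ah1 h) \<tau> v)
            in norm (w + \<tau> *\<^sub>R Ah2 h w)) = norm (T (neg_frac_pow D A z x))"
        unfolding T_def Sx_def Let_def ..
      have bnd: "norm (T (neg_frac_pow D A z x)) \<le> K * \<tau> powr z * norm x"
      proof (cases "z = 0")
        case True
        then show ?thesis using M tau unfolding K_def by (simp add: neg_frac_pow_def)
      next
        case z0: False
        show ?thesis
        proof (cases "z = 1")
          case True
          then show ?thesis using M tau unfolding K_def by (simp add: neg_frac_pow_def)
        next
          case z1: False
          have zz: "0 < z" "z < 1" using z z0 z1 by auto
          have "norm (T (neg_frac_pow D A z x)) \<le> (C1 * (1 + Cs) / (1 - z) + C0 * Cs / z) * \<tau> powr z * norm x"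
            by (rule g.interp_bound[OF _ _ _ _ C00 C10 Cs0 Cs tau zz]) (use M in blast)+
          then show ?thesis unfolding K_def using z0 z1 by simp
        qed
      qed
      show "(let v = P h (neg_frac_pow D A z x);
                w = semigroup_op (Ah h) \<tau> v
                    - shift_inv (V h) (Ah2 h) \<tau> (shift_inv (V h) (Ah1 h) \<tau> v)
            in norm (w + \<tau> *\<^sub>R Ah2 h w)) \<le> K * \<tau> powr z * norm x"
        unfolding eqlet by (rule bnd)
    qed
  qed
qed

end
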